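(* Let $(l_n)_{n\ge 1}$, $(r_n)_{n\ge 1}$ be real numbers with $l_n,r_n>0$ and $l_n+r_n=1$ for all $n\ge 1$, and let $k\ge 1$ be an integer. Let $(X_m)_{m\ge 0}$ be the birth-death chain on $\{0,1,2,\dots\}$ with these probabilities started at $X_0=k$, and let $T_\Delta$ be its first hitting time of $0$ ($T_\Delta=\infty$ if $0$ is never hit). For $n\ge 1$ set $t_n=\frac{l_1\cdots l_n}{r_1\cdots r_n}$. Suppose that $t_\infty:=\lim_{n\to\infty} t_n$ exists in $[0,\infty]$. Then for every non-decreasing sequence of stopping times $(T_m)_{m\ge 1}$ with $E[T_m]<\infty$ for all $m$ and $T_m\to T_\Delta$ almost surely, the limit $\lim_{m\to\infty}E[X_{T_m}]$ exists and $$\lim_{m\to\infty}E[X_{T_m}]=\frac{1+\frac{l_1}{r_1}+\frac{l_1l_2}{r_1r_2}+\cdots+\frac{l_1\cdots l_{k-1}}{r_1\cdots r_{k-1}}}{t_\infty},$$ where the right-hand side is interpreted as $0$ if $t_\infty=+\infty$ and as $+\infty$ if $t_\infty=0$.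
   Context: The birth-death chain: $(X_m)$ is a time-homogeneous Markov chain on the nonnegative integers such that from a state $n\ge 1$ it moves to $n+1$ with probability $r_n$ and to $n-1$ with probability $l_n$ (and to no other state), while $0$ is absorbing ($p_{00}=1$). Stopping times are with respect to the natural filtration of $(X_m)$. *)

theory Defs
  imports "HOL-Probability.Probability"
begin

definition bd_trans :: "(nat \<Rightarrow> real) \<Rightarrow> (nat \<Rightarrow> real) \<Rightarrow> nat \<Rightarrow> nat \<Rightarrow> real" where
  "bd_trans l r n j =
     (if n = 0 then (if j = 0 then 1 else 0)
      else if j = Suc n then r n
      else if Suc j = n then l n
      else 0)"

definition bd_chain ::
  "'a measure \<Rightarrow> (nat \<Rightarrow> real) \<Rightarrow> (nat \<Rightarrow> real) \<Rightarrow> nat \<Rightarrow> (nat \<Rightarrow> 'a \<Rightarrow> nat) \<Rightarrow> bool" where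
  "bd_chain M l r k X \<longleftrightarrow>
     prob_space M \<and>
     (\<forall>m. X m \<in> measurable M (count_space UNIV)) \<and>
     (AE x in M. X 0 x = k) \<and>
     (\<forall>m (s :: nat \<Rightarrow> nat) j.
        measure M {x \<in> space M. (\<forall>i\<le>m. X i x = s i) \<and> X (Suc m) x = j}
        = bd_trans l r (s m) j * measure M {x \<in> space M. \<forall>i\<le>m. X i x = s i})"

text \<open>Stopping time (possibly infinite) with respect to the natural filtration of X:
  each event {T = n} lies in the sigma-algebra generated by X 0, ..., X n
  (for discrete-valued X these are exactly the preimages of sets of paths).\<close>
definition nat_stopping_time ::
  "'a measure \<Rightarrow> (nat \<Rightarrow> 'a \<Rightarrow> nat) \<Rightarrow> ('a \<Rightarrow> enat) \<Rightarrow> bool" where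
  "nat_stopping_time M X T \<longleftrightarrow>
     (\<forall>n::nat. \<exists>B :: nat list set.
        {x \<in> space M. T x = enat n} = {x \<in> space M. map (\<lambda>i. X i x) [0..<Suc n] \<in> B})"

definition hit_zero :: "(nat \<Rightarrow> 'a \<Rightarrow> nat) \<Rightarrow> 'a \<Rightarrow> enat" where
  "hit_zero X x = (if \<exists>n. X n x = 0 then enat (LEAST n. X n x = 0) else \<infinity>)"

text \<open>The stopped value X_T (set to 0 on the event T = infinity, which is null
  whenever T has finite expectation).\<close>
definition stopped_val :: "(nat \<Rightarrow> 'a \<Rightarrow> nat) \<Rightarrow> ('a \<Rightarrow> enat) \<Rightarrow> 'a \<Rightarrow> nat" where
  "stopped_val X T x = (case T x of enat n \<Rightarrow> X n x | \<infinity> \<Rightarrow> 0)"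

definition t_seq :: "(nat \<Rightarrow> real) \<Rightarrow> (nat \<Rightarrow> real) \<Rightarrow> nat \<Rightarrow> real" where
  "t_seq l r n = (\<Prod>i=1..n. l i) / (\<Prod>i=1..n. r i)"

end

theory Submission
  imports Defs
begin


lemma nn_integral_decomp:
  fixes Z :: "'a \<Rightarrow> 'b::countable"
  assumes Z[measurable]: "Z \<in> M \<rightarrow>\<^sub>M count_space UNIV" and h[measurable]: "h \<in> borel_measurable M"
  shows "(\<integral>\<^sup>+x. h x \<partial>M) = (\<integral>\<^sup>+b. (\<integral>\<^sup>+x. h x * indicator {x\<in>space M. Z x = b} x \<partial>M) \<partial>count_space UNIV)"
proof -
  have "(\<integral>\<^sup>+b. (\<integral>\<^sup>+x. h x * indicator {x\<in>space M. Z x = b} x \<partial>M) \<partial>count_space UNIV)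
      = (\<integral>\<^sup>+x. (\<integral>\<^sup>+b. h x * indicator {x\<in>space M. Z x = b} x \<partial>count_space UNIV) \<partial>M)"
    by (rule nn_integral_count_space_nn_integral[symmetric]) auto
  also have "\<dots> = (\<integral>\<^sup>+x. h x \<partial>M)"
  proof (rule nn_integral_cong)
    fix x assume x: "x \<in> space M"
    have "(\<integral>\<^sup>+b. h x * indicator {x\<in>space M. Z x = b} x \<partial>count_space UNIV)
       = (\<integral>\<^sup>+b. h x * indicator {Z x} b \<partial>count_space UNIV)"
      using x by (intro nn_integral_cong) (auto split: split_indicator)
    also have "\<dots> = h x" by simp
    finally show "(\<integral>\<^sup>+b. h x * indicator {x\<in>space M. Z x = b} x \<partial>count_space UNIV) = h x" .
  qed
  finally show ?thesis ..
qed

definition pth :: "(nat \<Rightarrow> 'a \<Rightarrow> nat) \<Rightarrow> nat \<Rightarrow> 'a \<Rightarrow> nat list" where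
  "pth X n x = map (\<lambda>i. X i x) [0..<Suc n]"

definition PE :: "(nat \<Rightarrow> real) \<Rightarrow> (nat \<Rightarrow> real) \<Rightarrow> (nat \<Rightarrow> nat \<Rightarrow> ennreal) \<Rightarrow> nat \<Rightarrow> ennreal" where
  "PE l r g a = (\<Sum>j. ennreal (bd_trans l r a j) * g a j)"

lemma pth_eq_iff: "pth X n x = s \<longleftrightarrow> length s = Suc n \<and> (\<forall>i\<le>n. X i x = s ! i)"
  unfolding pth_def by (auto simp: list_eq_iff_nth_eq less_Suc_eq_le nth_map_upt simp del: upt_Suc)

definition qq :: "(nat \<Rightarrow> real) \<Rightarrow> (nat \<Rightarrow> real) \<Rightarrow> nat \<Rightarrow> real" where
  "qq l r j = (\<Prod>i=1..j. l i / r i)"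

definition phi :: "(nat \<Rightarrow> real) \<Rightarrow> (nat \<Rightarrow> real) \<Rightarrow> nat \<Rightarrow> real" where
  "phi l r n = (\<Sum>j<n. qq l r j)"

locale bdc =
  fixes M :: "'a measure" and l r :: "nat \<Rightarrow> real" and k :: nat and X :: "nat \<Rightarrow> 'a \<Rightarrow> nat"
  assumes lr_pos: "\<And>n. n \<ge> 1 \<Longrightarrow> l n > 0 \<and> r n > 0"
    and lr_sum: "\<And>n. n \<ge> 1 \<Longrightarrow> l n + r n = 1"
    and chain: "bd_chain M l r k X"
begin

lemma PS: "prob_space M" using chain unfolding bd_chain_def by auto

sublocale prob_space M by (rule PS)

lemma X_meas[measurable]: "X m \<in> M \<rightarrow>\<^sub>M count_space UNIV"
  using chain unfolding bd_chain_def by auto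

lemma X_set: "{x\<in>space M. X i x \<in> S} \<in> sets M"
proof -
  have "{x\<in>space M. X i x \<in> S} = X i -` S \<inter> space M" by auto
  then show ?thesis using measurable_sets[OF X_meas, of S i] by simp
qed

lemma X0: "AE x in M. X 0 x = k"
  using chain unfolding bd_chain_def by auto

lemma trans_eq: "measure M {x \<in> space M. (\<forall>i\<le>m. X i x = s i) \<and> X (Suc m) x = j}
        = bd_trans l r (s m) j * measure M {x \<in> space M. \<forall>i\<le>m. X i x = s i}"
  using chain unfolding bd_chain_def by auto

lemma bd_nonneg: "bd_trans l r a j \<ge> 0"
  using lr_pos[of a] by (auto simp: bd_trans_def)

lemma pth_meas[measurable]: "pth X n \<in> M \<rightarrow>\<^sub>M count_space UNIV"
proof -
  have "{x \<in> space M. pth X n x = s} \<in> sets M" for s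
  proof -
    have "{x \<in> space M. pth X n x = s} = {x \<in> space M. length s = Suc n \<and> (\<forall>i\<in>{..n}. X i x = s ! i)}"
      by (auto simp: pth_eq_iff)
    also have "\<dots> \<in> sets M" by measurable
    finally show ?thesis .
  qed
  then show ?thesis
    by (auto simp: measurable_count_space_eq2_countable vimage_def Int_def conj_commute)
qed

lemma trans_emeasure:
  assumes len: "length s = Suc n"
  shows "emeasure M ({x\<in>space M. pth X n x = s} \<inter> {x\<in>space M. X (Suc n) x = j})
     = ennreal (bd_trans l r (s!n) j) * emeasure M {x\<in>space M. pth X n x = s}"
proof -
  have e1: "{x\<in>space M. pth X n x = s} \<inter> {x\<in>space M. X (Suc n) x = j}
      = {x \<in> space M. (\<forall>i\<le>n. X i x = s ! i) \<and> X (Suc n) x = j}"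
    using len by (auto simp: pth_eq_iff)
  have e2: "{x\<in>space M. pth X n x = s} = {x \<in> space M. \<forall>i\<le>n. X i x = s ! i}"
    using len by (auto simp: pth_eq_iff)
  show ?thesis
    apply (subst e1, subst e2)
    unfolding emeasure_eq_measure trans_eq[of n "\<lambda>i. s ! i" j]
    using bd_nonneg by (simp add: ennreal_mult)
qed

lemma step:
  fixes g :: "nat \<Rightarrow> nat \<Rightarrow> ennreal"
  shows "(\<integral>\<^sup>+x. indicator {x\<in>space M. pth X n x \<in> B} x * g (X n x) (X (Suc n) x) \<partial>M)
       = (\<integral>\<^sup>+x. indicator {x\<in>space M. pth X n x \<in> B} x * PE l r g (X n x) \<partial>M)"
proof -
  let ?C = "{x\<in>space M. pth X n x \<in> B}"
  have Cm[measurable]: "?C \<in> sets M" by measurable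
  have "(\<integral>\<^sup>+x. indicator ?C x * g (X n x) (X (Suc n) x) \<partial>M)
     = (\<integral>\<^sup>+s. (\<integral>\<^sup>+x. (indicator ?C x * g (X n x) (X (Suc n) x)) * indicator {x\<in>space M. pth X n x = s} x \<partial>M) \<partial>count_space UNIV)"
    by (rule nn_integral_decomp) measurable
  also have "\<dots> = (\<integral>\<^sup>+s. (\<integral>\<^sup>+x. (indicator ?C x * PE l r g (X n x)) * indicator {x\<in>space M. pth X n x = s} x \<partial>M) \<partial>count_space UNIV)"
  proof (rule nn_integral_cong)
    fix s :: "nat list"
    let ?A = "{x\<in>space M. pth X n x = s}"
    have Am[measurable]: "?A \<in> sets M" by measurable
    show "(\<integral>\<^sup>+x. (indicator ?C x * g (X n x) (X (Suc n) x)) * indicator ?A x \<partial>M)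
        = (\<integral>\<^sup>+x. (indicator ?C x * PE l r g (X n x)) * indicator ?A x \<partial>M)"
    proof (cases "length s = Suc n")
      case False
      then have "?A = {}" by (auto simp: pth_eq_iff)
      then show ?thesis by simp
    next
      case len: True
      have Xn: "x \<in> ?A \<Longrightarrow> X n x = s ! n" for x by (auto simp: pth_eq_iff)
      have "(\<integral>\<^sup>+x. (indicator ?C x * g (X n x) (X (Suc n) x)) * indicator ?A x \<partial>M)
          = (\<integral>\<^sup>+x. (indicator B s * g (s!n) (X (Suc n) x)) * indicator ?A x \<partial>M)"
        by (intro nn_integral_cong) (auto simp: Xn split: split_indicator)
      also have "\<dots> = (\<integral>\<^sup>+j. (\<integral>\<^sup>+x. ((indicator B s * g (s!n) (X (Suc n) x)) * indicator ?A x) * indicator {x\<in>space M. X (Suc n) x = j} x \<partial>M) \<partial>count_space UNIV)"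
        by (rule nn_integral_decomp) measurable
      also have "\<dots> = (\<integral>\<^sup>+j. (indicator B s * emeasure M ?A) * (ennreal (bd_trans l r (s!n) j) * g (s!n) j) \<partial>count_space UNIV)"
      proof (rule nn_integral_cong)
        fix j
        have "(\<integral>\<^sup>+x. ((indicator B s * g (s!n) (X (Suc n) x)) * indicator ?A x) * indicator {x\<in>space M. X (Suc n) x = j} x \<partial>M)
           = (\<integral>\<^sup>+x. (indicator B s * g (s!n) j) * indicator (?A \<inter> {x\<in>space M. X (Suc n) x = j}) x \<partial>M)"
          by (intro nn_integral_cong) (auto split: split_indicator)
        also have "\<dots> = (indicator B s * g (s!n) j) * emeasure M (?A \<inter> {x\<in>space M. X (Suc n) x = j})"
          by (rule nn_integral_cmult_indicator) measurable
        also have "\<dots> = (indicator B s * emeasure M ?A) * (ennreal (bd_trans l r (s!n) j) * g (s!n) j)"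
          unfolding trans_emeasure[OF len] by (simp add: ac_simps)
        finally show "(\<integral>\<^sup>+x. ((indicator B s * g (s!n) (X (Suc n) x)) * indicator ?A x) * indicator {x\<in>space M. X (Suc n) x = j} x \<partial>M)
           = (indicator B s * emeasure M ?A) * (ennreal (bd_trans l r (s!n) j) * g (s!n) j)" .
      qed
      also have "\<dots> = (indicator B s * emeasure M ?A) * PE l r g (s!n)"
        by (simp add: nn_integral_cmult nn_integral_count_space_nat PE_def)
      also have "\<dots> = (\<integral>\<^sup>+x. (indicator B s * PE l r g (s!n)) * indicator ?A x \<partial>M)"
        by (subst nn_integral_cmult_indicator) (simp_all add: ac_simps)
      also have "\<dots> = (\<integral>\<^sup>+x. (indicator ?C x * PE l r g (X n x)) * indicator ?A x \<partial>M)"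
        by (intro nn_integral_cong) (auto simp: Xn split: split_indicator)
      finally show ?thesis .
    qed
  qed
  also have "\<dots> = (\<integral>\<^sup>+x. indicator ?C x * PE l r g (X n x) \<partial>M)"
    by (rule nn_integral_decomp[symmetric]) measurable
  finally show ?thesis .
qed

lemma step_all:
  fixes g :: "nat \<Rightarrow> nat \<Rightarrow> ennreal"
  shows "(\<integral>\<^sup>+x. g (X n x) (X (Suc n) x) \<partial>M) = (\<integral>\<^sup>+x. PE l r g (X n x) \<partial>M)"
proof -
  have "(\<integral>\<^sup>+x. g (X n x) (X (Suc n) x) \<partial>M) = (\<integral>\<^sup>+x. indicator {x\<in>space M. pth X n x \<in> UNIV} x * g (X n x) (X (Suc n) x) \<partial>M)"
    by (rule nn_integral_cong) simp
  also have "\<dots> = (\<integral>\<^sup>+x. indicator {x\<in>space M. pth X n x \<in> UNIV} x * PE l r g (X n x) \<partial>M)"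
    by (rule step)
  also have "\<dots> = (\<integral>\<^sup>+x. PE l r g (X n x) \<partial>M)"
    by (rule nn_integral_cong) simp
  finally show ?thesis .
qed

lemma PE_0: "PE l r g 0 = g 0 0"
proof -
  have "PE l r g 0 = (\<Sum>j\<in>{0}. ennreal (bd_trans l r 0 j) * g 0 j)"
    unfolding PE_def by (rule suminf_finite) (auto simp: bd_trans_def)
  then show ?thesis by (simp add: bd_trans_def)
qed

lemma PE_pos: assumes "a \<ge> 1"
  shows "PE l r g a = ennreal (r a) * g a (Suc a) + ennreal (l a) * g a (a - 1)"
proof -
  have "PE l r g a = (\<Sum>j\<in>{a - 1, Suc a}. ennreal (bd_trans l r a j) * g a j)"
    unfolding PE_def by (rule suminf_finite) (use assms in \<open>auto simp: bd_trans_def\<close>)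
  also have "\<dots> = ennreal (r a) * g a (Suc a) + ennreal (l a) * g a (a - 1)"
  proof -
    have ne: "a - Suc 0 \<noteq> Suc a" by arith
    show ?thesis using assms ne by (simp add: bd_trans_def add.commute)
  qed
  finally show ?thesis .
qed

lemma nn_AE: "AE x in M. bd_trans l r (X n x) (X (Suc n) x) \<noteq> 0"
proof -
  let ?g = "\<lambda>a b. if bd_trans l r a b = 0 then (1::ennreal) else 0"
  have "PE l r ?g a = 0" for a
    unfolding PE_def by (simp add: suminf_eq_zero_iff)
  then have "(\<integral>\<^sup>+x. ?g (X n x) (X (Suc n) x) \<partial>M) = 0"
    by (subst step_all) simp
  then have "AE x in M. ?g (X n x) (X (Suc n) x) = 0"
    by (subst (asm) nn_integral_0_iff_AE) auto
  then show ?thesis by (auto split: if_splits)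
qed

definition good :: "'a \<Rightarrow> bool" where
  "good x \<longleftrightarrow> X 0 x = k \<and> (\<forall>n. bd_trans l r (X n x) (X (Suc n) x) \<noteq> 0)"

lemma AE_good: "AE x in M. good x"
  using X0 nn_AE unfolding good_def by (auto simp: AE_all_countable)

lemma good_0: "good x \<Longrightarrow> X n x = 0 \<Longrightarrow> X (Suc n) x = 0"
  unfolding good_def bd_trans_def by (auto split: if_splits)

lemma good_pos: "good x \<Longrightarrow> X n x \<noteq> 0 \<Longrightarrow> X (Suc n) x = Suc (X n x) \<or> Suc (X (Suc n) x) = X n x"
  unfolding good_def bd_trans_def by (auto split: if_splits)

lemma pth_take: "i \<le> n \<Longrightarrow> take (Suc i) (pth X n x) = pth X i x"
  unfolding pth_def by (simp add: take_map del: upt_Suc)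

lemma st_eq: "nat_stopping_time M X T \<Longrightarrow> \<exists>B. {x\<in>space M. T x = enat n} = {x\<in>space M. pth X n x \<in> B}"
  unfolding nat_stopping_time_def pth_def by blast

lemma st_le: assumes "nat_stopping_time M X T"
  shows "\<exists>B. {x\<in>space M. T x \<le> enat n} = {x\<in>space M. pth X n x \<in> B}"
proof -
  obtain BB where BB: "\<And>i. {x\<in>space M. T x = enat i} = {x\<in>space M. pth X i x \<in> BB i}"
    using st_eq[OF assms] by metis
  have "{x\<in>space M. T x \<le> enat n} = {x\<in>space M. pth X n x \<in> {s. \<exists>i\<le>n. take (Suc i) s \<in> BB i}}"
  proof (intro set_eqI iffI)
    fix x assume x: "x \<in> {x\<in>space M. T x \<le> enat n}"
    then obtain i where i: "T x = enat i" "i \<le> n" by (cases "T x") auto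
    then have "pth X i x \<in> BB i" using BB[of i] x by blast
    then show "x \<in> {x\<in>space M. pth X n x \<in> {s. \<exists>i\<le>n. take (Suc i) s \<in> BB i}}"
      using i x pth_take[of i n x] by auto
  next
    fix x assume x: "x \<in> {x\<in>space M. pth X n x \<in> {s. \<exists>i\<le>n. take (Suc i) s \<in> BB i}}"
    then obtain i where i: "i \<le> n" "pth X i x \<in> BB i" using pth_take by auto
    then have "T x = enat i" using BB[of i] x by blast
    then show "x \<in> {x\<in>space M. T x \<le> enat n}" using i x by auto
  qed
  then show ?thesis by blast
qed

lemma T_meas: assumes "nat_stopping_time M X T" shows "T \<in> M \<rightarrow>\<^sub>M count_space UNIV"
proof -
  have E: "{x\<in>space M. T x = enat n} \<in> sets M" for n
  proof -
    obtain B where "{x\<in>space M. T x = enat n} = {x\<in>space M. pth X n x \<in> B}"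
      using st_eq[OF assms] by blast
    moreover have "{x\<in>space M. pth X n x \<in> B} \<in> sets M" by measurable
    ultimately show ?thesis by simp
  qed
  have "T -` {a} \<inter> space M \<in> sets M" for a
  proof (cases a)
    case (enat n) then show ?thesis using E[of n] by (simp add: vimage_def Int_def conj_commute)
  next
    case infinity
    have "T -` {a} \<inter> space M = space M - (\<Union>n. {x\<in>space M. T x = enat n})"
      using infinity by (force simp: not_infinity_eq)
    also have "\<dots> \<in> sets M" using E by auto
    finally show ?thesis .
  qed
  then show ?thesis by (auto simp: measurable_count_space_eq2_countable)
qed

definition stp :: "('a \<Rightarrow> enat) \<Rightarrow> nat \<Rightarrow> 'a \<Rightarrow> nat" where
  "stp T n x = (case T x of enat t \<Rightarrow> min t n | \<infinity> \<Rightarrow> n)"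

lemma stp_meas: assumes "nat_stopping_time M X T" shows "stp T n \<in> M \<rightarrow>\<^sub>M count_space UNIV"
proof -
  have "(\<lambda>x. (\<lambda>e. case e of enat t \<Rightarrow> min t n | \<infinity> \<Rightarrow> n) (T x)) \<in> M \<rightarrow>\<^sub>M count_space UNIV"
    by (rule measurable_compose[OF T_meas[OF assms]]) simp
  then show ?thesis unfolding stp_def by simp
qed

lemma Xstp_meas: assumes "nat_stopping_time M X T" shows "(\<lambda>x. X (stp T n x) x) \<in> M \<rightarrow>\<^sub>M count_space UNIV"
  by (rule measurable_compose_countable[OF X_meas stp_meas[OF assms]])

lemma harm_stopped:
  fixes F :: "nat \<Rightarrow> ennreal"
  assumes T: "nat_stopping_time M X T" and F: "\<And>a. PE l r (\<lambda>a b. F b) a = F a"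
  shows "(\<integral>\<^sup>+x. F (X (stp T n x) x) \<partial>M) = F k"
proof (induction n)
  case 0
  have "(\<integral>\<^sup>+x. F (X (stp T 0 x) x) \<partial>M) = (\<integral>\<^sup>+x. F k \<partial>M)"
    apply (rule nn_integral_cong_AE) using X0 by eventually_elim (auto simp: stp_def split: enat.splits)
  then show ?case by (simp add: emeasure_space_1)
next
  case (Suc n)
  obtain B where B: "{x\<in>space M. T x \<le> enat n} = {x\<in>space M. pth X n x \<in> B}"
    using st_le[OF T] by blast
  let ?C = "{x\<in>space M. pth X n x \<in> -B}"
  let ?D = "{x\<in>space M. pth X n x \<in> B}"
  have Cm[measurable]: "?C \<in> sets M" "?D \<in> sets M" by measurable
  have CT: "x \<in> space M \<Longrightarrow> x \<in> ?C \<longleftrightarrow> \<not> T x \<le> enat n" for x using B by blast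
  have DT: "x \<in> space M \<Longrightarrow> x \<in> ?D \<longleftrightarrow> T x \<le> enat n" for x using B by blast
  have m1[measurable]: "(\<lambda>x. F (X (stp T n x) x)) \<in> borel_measurable M"
    by (rule measurable_compose[OF Xstp_meas[OF T]]) simp
  have e1: "(\<integral>\<^sup>+x. F (X (stp T (Suc n) x) x) \<partial>M)
     = (\<integral>\<^sup>+x. indicator ?D x * F (X (stp T n x) x) + indicator ?C x * F (X (Suc n) x) \<partial>M)"
  proof (rule nn_integral_cong)
    fix x assume x: "x \<in> space M"
    show "F (X (stp T (Suc n) x) x) = indicator ?D x * F (X (stp T n x) x) + indicator ?C x * F (X (Suc n) x)"
    proof (cases "T x \<le> enat n")
      case True then show ?thesis using x CT DT by (auto simp: stp_def split: enat.splits)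
    next
      case False then show ?thesis using x CT DT by (auto simp: stp_def split: enat.splits)
    qed
  qed
  have e2: "(\<integral>\<^sup>+x. F (X (stp T n x) x) \<partial>M)
     = (\<integral>\<^sup>+x. indicator ?D x * F (X (stp T n x) x) + indicator ?C x * F (X n x) \<partial>M)"
  proof (rule nn_integral_cong)
    fix x assume x: "x \<in> space M"
    show "F (X (stp T n x) x) = indicator ?D x * F (X (stp T n x) x) + indicator ?C x * F (X n x)"
    proof (cases "T x \<le> enat n")
      case True then show ?thesis using x CT DT by (auto simp: stp_def split: enat.splits)
    next
      case False then show ?thesis using x CT DT by (auto simp: stp_def split: enat.splits)
    qed
  qed
  have e3: "(\<integral>\<^sup>+x. indicator ?C x * F (X (Suc n) x) \<partial>M) = (\<integral>\<^sup>+x. indicator ?C x * F (X n x) \<partial>M)"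
    using step[of n "-B" "\<lambda>a b. F b"] by (simp add: F)
  show ?case
  proof -
    have m2: "(\<lambda>x. indicator ?D x * F (X (stp T n x) x)) \<in> borel_measurable M" by measurable
    have m3: "(\<lambda>x. indicator ?C x * F (X (Suc n) x)) \<in> borel_measurable M" by measurable
    have m4: "(\<lambda>x. indicator ?C x * F (X n x)) \<in> borel_measurable M" by measurable
    show ?thesis
      unfolding e1 Suc[symmetric] e2 nn_integral_add[OF m2 m3] nn_integral_add[OF m2 m4] e3 ..
  qed
qed

abbreviation "q \<equiv> qq l r"
abbreviation "\<phi> \<equiv> phi l r"

lemma q_pos: "q j > 0"
  unfolding qq_def using lr_pos by (auto intro!: prod_pos divide_pos_pos)

lemma q_Suc: "q (Suc n) = q n * (l (Suc n) / r (Suc n))"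
  unfolding qq_def by simp

lemma q_rec: "n \<ge> 1 \<Longrightarrow> r n * q n = l n * q (n - 1)"
proof -
  assume "n \<ge> 1"
  then obtain m where n: "n = Suc m" by (cases n) auto
  have "r n > 0" using lr_pos \<open>n \<ge> 1\<close> by auto
  then show ?thesis unfolding n q_Suc by (simp add: field_simps)
qed

lemma t_seq_q: "t_seq l r n = q n"
  unfolding t_seq_def qq_def by (simp add: prod_dividef)

lemma phi_Suc: "\<phi> (Suc n) = \<phi> n + q n"
  unfolding phi_def by simp

lemma phi_0: "\<phi> 0 = 0" unfolding phi_def by simp

lemma phi_nonneg: "\<phi> n \<ge> 0"
  unfolding phi_def using q_pos by (auto intro: sum_nonneg less_imp_le)

lemma phi_mono: "m \<le> n \<Longrightarrow> \<phi> m \<le> \<phi> n"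
  unfolding phi_def using q_pos by (intro sum_mono2) (auto intro: less_imp_le)

lemma phi_pos: "n \<ge> 1 \<Longrightarrow> \<phi> n > 0"
proof -
  assume "n \<ge> 1"
  then have "\<phi> 1 \<le> \<phi> n" by (rule phi_mono)
  moreover have "\<phi> 1 = 1" unfolding phi_def qq_def by simp
  ultimately show ?thesis by simp
qed

lemma phi_harm: assumes "n \<ge> 1" shows "r n * \<phi> (Suc n) + l n * \<phi> (n - 1) = \<phi> n"
proof -
  obtain m where n: "n = Suc m" using assms by (cases n) auto
  have s: "l n + r n = 1" using lr_sum assms by auto
  have "\<phi> (Suc n) = \<phi> n + q n" by (rule phi_Suc)
  moreover have "\<phi> n = \<phi> (n - 1) + q (n - 1)" using phi_Suc[of m] n by simp
  moreover have "r n * q n = l n * q (n - 1)" using q_rec assms by auto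
  ultimately show ?thesis using s by algebra
qed

lemma PE_phi: "PE l r (\<lambda>a b. ennreal (\<phi> b)) a = ennreal (\<phi> a)"
proof (cases "a \<ge> 1")
  case True
  have "PE l r (\<lambda>a b. ennreal (\<phi> b)) a = ennreal (r a * \<phi> (Suc a) + l a * \<phi> (a - 1))"
    using True lr_pos[OF True] phi_nonneg
    by (simp add: PE_pos ennreal_plus[symmetric] ennreal_mult[symmetric] del: ennreal_plus)
  then show ?thesis using phi_harm[OF True] by simp
next
  case False then have "a = 0" by simp
  then show ?thesis by (simp add: PE_0)
qed

lemma st_inf: "nat_stopping_time M X (\<lambda>_. \<infinity>)"
  unfolding nat_stopping_time_def by (intro allI exI[of _ "{}"]) auto

lemma E_phi_stopped: "nat_stopping_time M X T \<Longrightarrow> (\<integral>\<^sup>+x. ennreal (\<phi> (X (stp T n x) x)) \<partial>M) = ennreal (\<phi> k)"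
  by (rule harm_stopped[where F="\<lambda>b. ennreal (\<phi> b)"]) (simp_all add: PE_phi)

lemma E_phi: "(\<integral>\<^sup>+x. ennreal (\<phi> (X n x)) \<partial>M) = ennreal (\<phi> k)"
  using E_phi_stopped[OF st_inf, of n] by (simp add: stp_def)

definition G :: "nat \<Rightarrow> nat \<Rightarrow> real" where
  "G N n = (if n \<le> Suc N then \<phi> n ^ 2 else 2 * \<phi> (Suc N) * \<phi> n - \<phi> (Suc N) ^ 2)"

lemma G_nonneg: "G N n \<ge> 0"
proof (cases "n \<le> Suc N")
  case False
  then have "\<phi> (Suc N) \<le> \<phi> n" by (intro phi_mono) auto
  moreover have "\<phi> (Suc N) \<ge> 0" by (rule phi_nonneg)
  moreover have "\<phi> (Suc N) * \<phi> (Suc N) \<le> \<phi> (Suc N) * \<phi> n"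
    using calculation by (intro mult_left_mono) auto
  moreover have "\<phi> (Suc N) * \<phi> n \<ge> 0" using phi_nonneg by simp
  moreover have "G N n = \<phi> (Suc N) * \<phi> n + \<phi> (Suc N) * \<phi> n - \<phi> (Suc N) * \<phi> (Suc N)"
    using False unfolding G_def by (simp add: power2_eq_square)
  ultimately show ?thesis by linarith
qed (simp add: G_def)

lemma G_alt: "n \<ge> Suc N \<Longrightarrow> G N n = 2 * \<phi> (Suc N) * \<phi> n - \<phi> (Suc N) ^ 2"
  unfolding G_def by (cases "n = Suc N") (auto simp: power2_eq_square)

lemma G_le: "G N n \<le> 2 * \<phi> (Suc N) * \<phi> n"
proof (cases "n \<le> Suc N")
  case True
  then have a: "\<phi> n \<le> \<phi> (Suc N)" by (rule phi_mono)
  have "\<phi> n ^ 2 \<le> \<phi> (Suc N) * \<phi> n" using a phi_nonneg[of n] by (simp add: power2_eq_square mult_right_mono)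
  also have "\<dots> \<le> 2 * \<phi> (Suc N) * \<phi> n" using phi_nonneg[of n] phi_nonneg[of "Suc N"] by simp
  finally show ?thesis using True unfolding G_def by simp
qed (simp add: G_def)

lemma G_sub: assumes n: "n \<ge> 1"
  shows "r n * G N (Suc n) + l n * G N (n - 1) \<ge> G N n + (if n \<le> N then r n * q n ^ 2 else 0)"
proof -
  have s: "l n + r n = 1" using lr_sum n by auto
  have lp: "l n > 0" "r n > 0" using lr_pos n by auto
  have p1: "\<phi> (Suc n) = \<phi> n + q n" by (rule phi_Suc)
  have p2: "\<phi> (n - 1) = \<phi> n - q (n - 1)" using phi_Suc[of "n - 1"] n by simp
  have rec: "r n * q n = l n * q (n - 1)" using q_rec n by auto
  consider "n \<le> N" | "n = Suc N" | "n > Suc N" by linarith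
  then show ?thesis
  proof cases
    case 1
    then have "G N (Suc n) = (\<phi> n + q n)^2" "G N (n - 1) = (\<phi> n - q (n - 1))^2" "G N n = \<phi> n ^ 2"
      using p1 p2 by (auto simp: G_def)
    moreover have "r n * (\<phi> n + q n)^2 + l n * (\<phi> n - q (n - 1))^2
       = \<phi> n ^ 2 + r n * q n ^ 2 + l n * q (n - 1) ^ 2"
    proof -
      have "r n * (\<phi> n + q n)^2 + l n * (\<phi> n - q (n - 1))^2
         = (l n + r n) * \<phi> n ^ 2 + 2 * \<phi> n * (r n * q n - l n * q (n - 1)) + r n * q n ^ 2 + l n * q (n - 1) ^ 2"
        by (simp add: power2_eq_square algebra_simps)
      then show ?thesis using s rec by simp
    qed
    ultimately show ?thesis using 1 lp by (simp add: mult_nonneg_nonneg)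
  next
    case 2
    let ?a = "\<phi> (Suc N)"
    have "G N (Suc n) = 2 * ?a * (?a + q n) - ?a^2" "G N (n - 1) = (?a - q (n - 1))^2" "G N n = ?a ^ 2"
      using p1 p2 2 by (auto simp: G_def)
    moreover have "r n * (2 * ?a * (?a + q n) - ?a^2) + l n * (?a - q (n - 1))^2
       = (l n + r n) * ?a ^ 2 + 2 * ?a * (r n * q n - l n * q (n - 1)) + l n * q (n - 1) ^ 2"
      by (simp add: power2_eq_square algebra_simps)
    ultimately show ?thesis using 2 lp s rec by simp
  next
    case 3
    let ?a = "\<phi> (Suc N)"
    have "G N (Suc n) = 2 * ?a * \<phi> (Suc n) - ?a^2" "G N (n - 1) = 2 * ?a * \<phi> (n - 1) - ?a^2"
      "G N n = 2 * ?a * \<phi> n - ?a^2"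
      using 3 by (auto intro!: G_alt)
    moreover have "r n * (2 * ?a * \<phi> (Suc n) - ?a^2) + l n * (2 * ?a * \<phi> (n - 1) - ?a^2)
       = 2 * ?a * (r n * \<phi> (Suc n) + l n * \<phi> (n - 1)) - (l n + r n) * ?a^2"
      by (simp add: algebra_simps)
    ultimately show ?thesis using 3 s phi_harm[OF n] by simp
  qed
qed

lemma ind_fin:
  fixes A :: "nat \<Rightarrow> 'b set"
  assumes "(\<Sum>i. indicator (A i) x :: ennreal) \<noteq> \<top>"
  shows "finite {i. x \<in> A i}"
proof -
  have "(\<Sum>i. ennreal (indicator (A i) x)) \<noteq> \<top>" using assms by (simp add: ennreal_indicator)
  then have "summable (\<lambda>i. indicator (A i) x :: real)"
    by (intro summable_suminf_not_top) auto
  then have "(\<lambda>i. indicator (A i) x :: real) \<longlonglongrightarrow> 0" by (rule summable_LIMSEQ_zero)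
  then have "eventually (\<lambda>i. indicator (A i) x < (1::real)) sequentially"
    by (rule order_tendstoD) simp
  then obtain N0 where "\<And>i. i \<ge> N0 \<Longrightarrow> indicator (A i) x < (1::real)"
    by (auto simp: eventually_sequentially)
  then have "{i. x \<in> A i} \<subseteq> {..<N0}"
    by (metis (mono_tags, lifting) indicator_simps(1) lessThan_iff linorder_not_less mem_Collect_eq order_less_irrefl subsetI)
  then show ?thesis by (rule finite_subset) simp
qed

lemma visits_fin: assumes N: "N \<ge> 1" shows "AE x in M. finite {i. X i x \<in> {1..N}}"
proof -
  define c where "c = Min ((\<lambda>n. r n * q n ^ 2) ` {1..N})"
  have c_pos: "c > 0" unfolding c_def using N lr_pos q_pos by (auto simp: Min_gr_iff intro!: mult_pos_pos, metis less_irrefl)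
  have c_le: "n \<in> {1..N} \<Longrightarrow> c \<le> r n * q n ^ 2" for n unfolding c_def by (intro Min_le) auto
  let ?g = "\<lambda>a b. ennreal (G N b)"
  have PEG: "PE l r ?g a \<ge> ennreal (G N a) + ennreal c * indicator {1..N} a" for a
  proof (cases "a \<ge> 1")
    case True
    have "PE l r ?g a = ennreal (r a * G N (Suc a) + l a * G N (a - 1))"
      using True lr_pos[OF True] G_nonneg
      by (simp add: PE_pos ennreal_plus[symmetric] ennreal_mult[symmetric] del: ennreal_plus)
    moreover have "ennreal (G N a) + ennreal c * indicator {1..N} a = ennreal (G N a + c * indicator {1..N} a)"
      using c_pos G_nonneg by (simp add: ennreal_plus ennreal_mult ennreal_indicator)
    moreover have "G N a + c * indicator {1..N} a \<le> r a * G N (Suc a) + l a * G N (a - 1)"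
      using G_sub[OF True, of N] c_le[of a] True by (auto simp: indicator_def split: if_splits)
    ultimately show ?thesis by (simp add: ennreal_leI)
  next
    case False then have "a = 0" by simp
    then show ?thesis by (simp add: PE_0)
  qed
  let ?A = "\<lambda>i. {x\<in>space M. X i x \<in> {1..N}}"
  have Am[measurable]: "?A i \<in> sets M" for i by (rule X_set)
  have EG: "(\<integral>\<^sup>+x. ennreal (G N (X n x)) \<partial>M) \<ge> ennreal c * (\<Sum>i<n. emeasure M (?A i))" for n
  proof (induction n)
    case (Suc n)
    have "ennreal c * (\<Sum>i<Suc n. emeasure M (?A i)) = ennreal c * (\<Sum>i<n. emeasure M (?A i)) + ennreal c * emeasure M (?A n)"
      by (simp add: distrib_left)
    also have "\<dots> \<le> (\<integral>\<^sup>+x. ennreal (G N (X n x)) \<partial>M) + (\<integral>\<^sup>+x. ennreal c * indicator (?A n) x \<partial>M)"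
      using Suc by (intro add_mono) (simp_all add: nn_integral_cmult_indicator)
    also have "\<dots> = (\<integral>\<^sup>+x. ennreal (G N (X n x)) + ennreal c * indicator {1..N} (X n x) \<partial>M)"
    proof -
      have m1: "(\<lambda>x. ennreal (G N (X n x))) \<in> borel_measurable M" by measurable
      have m2: "(\<lambda>x. ennreal c * indicator (?A n) x) \<in> borel_measurable M" by measurable
      show ?thesis unfolding nn_integral_add[OF m1 m2, symmetric]
        by (auto intro!: nn_integral_cong split: split_indicator)
    qed
    also have "\<dots> \<le> (\<integral>\<^sup>+x. PE l r ?g (X n x) \<partial>M)"
      by (intro nn_integral_mono PEG)
    also have "\<dots> = (\<integral>\<^sup>+x. ennreal (G N (X (Suc n) x)) \<partial>M)"
      by (rule step_all[symmetric])
    finally show ?case .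
  qed simp
  have EGle: "(\<integral>\<^sup>+x. ennreal (G N (X n x)) \<partial>M) \<le> ennreal (2 * \<phi> (Suc N)) * ennreal (\<phi> k)" for n
  proof -
    have "(\<integral>\<^sup>+x. ennreal (G N (X n x)) \<partial>M) \<le> (\<integral>\<^sup>+x. ennreal (2 * \<phi> (Suc N)) * ennreal (\<phi> (X n x)) \<partial>M)"
      using G_le phi_nonneg by (intro nn_integral_mono) (simp add: ennreal_mult[symmetric] ennreal_leI)
    also have "\<dots> = ennreal (2 * \<phi> (Suc N)) * ennreal (\<phi> k)"
      by (subst nn_integral_cmult) (simp_all add: E_phi)
    finally show ?thesis .
  qed
  define B where "B = ennreal (1 / c) * (ennreal (2 * \<phi> (Suc N)) * ennreal (\<phi> k))"
  have Bfin: "B < \<top>" unfolding B_def by (simp add: ennreal_mult_less_top)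
  have part: "(\<Sum>i<n. emeasure M (?A i)) \<le> B" for n
  proof -
    have "(\<Sum>i<n. emeasure M (?A i)) = ennreal (1 / c) * (ennreal c * (\<Sum>i<n. emeasure M (?A i)))"
      using c_pos by (simp add: mult.assoc[symmetric] ennreal_mult[symmetric])
    also have "\<dots> \<le> B" unfolding B_def
      by (intro mult_left_mono order.trans[OF EG EGle]) auto
    finally show ?thesis .
  qed
  have "(\<Sum>i. emeasure M (?A i)) \<le> B"
    unfolding suminf_eq_SUP by (intro SUP_least part)
  then have f1: "(\<Sum>i. emeasure M (?A i)) \<noteq> \<top>" using Bfin by auto
  have f2: "(\<integral>\<^sup>+x. (\<Sum>i. indicator (?A i) x) \<partial>M) = (\<Sum>i. emeasure M (?A i))"
    using nn_integral_suminf[of "\<lambda>i x. indicator (?A i) x" M] by (simp add: Am)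
  have AEs: "AE x in M. (\<Sum>i. indicator (?A i) x) \<noteq> (\<top>::ennreal)"
  proof -
    have mm: "(\<lambda>x. \<Sum>i. indicator (?A i) x :: ennreal) \<in> borel_measurable M"
      by (rule borel_measurable_suminf_order) (simp add: Am)
    have "(\<integral>\<^sup>+x. (\<Sum>i. indicator (?A i) x) \<partial>M) \<noteq> \<infinity>" unfolding f2 using f1 by simp
    from nn_integral_PInf_AE[OF mm this, unfolded infinity_ennreal_def] show ?thesis .
  qed
  have fin: "(\<Sum>i. indicator (?A i) x) \<noteq> (\<top>::ennreal) \<longrightarrow> finite {i. X i x \<in> {1..N}}" if x: "x \<in> space M" for x
  proof
    assume s: "(\<Sum>i. indicator (?A i) x) \<noteq> (\<top>::ennreal)"
    have e: "{i. X i x \<in> {1..N}} = {i. x \<in> ?A i}" using x by blast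
    show "finite {i. X i x \<in> {1..N}}" unfolding e by (rule ind_fin[OF s])
  qed
  show ?thesis by (rule AE_mp[OF AEs AE_I2[OF fin]])
qed

end



lemma hit_inf_iff: "hit_zero X x = \<infinity> \<longleftrightarrow> (\<forall>n. X n x \<noteq> 0)"
  unfolding hit_zero_def by auto

lemma hit_fin: "hit_zero X x = enat h \<Longrightarrow> X h x = 0"
  unfolding hit_zero_def by (auto split: if_splits intro: LeastI)

context bdc begin

lemma escape: "AE x in M. hit_zero X x = \<infinity> \<longrightarrow> (\<forall>N. eventually (\<lambda>n. N < X n x) sequentially)"
proof -
  have "AE x in M. \<forall>N. finite {i. X i x \<in> {1..Suc N}}"
    by (subst AE_all_countable) (intro allI visits_fin, simp)
  then show ?thesis
  proof (rule AE_mp, intro AE_I2 impI allI)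
    fix x N assume fin: "\<forall>N. finite {i. X i x \<in> {1..Suc N}}" and h: "hit_zero X x = \<infinity>"
    obtain n0 where n0: "\<And>i. i \<in> {i. X i x \<in> {1..Suc N}} \<Longrightarrow> i < n0"
      using fin[rule_format, of N] by (metis finite_nat_set_iff_bounded)
    have "N < X i x" if "i \<ge> n0" for i
    proof -
      have "X i x \<noteq> 0" using h by (simp add: hit_inf_iff)
      moreover have "X i x \<notin> {1..Suc N}" using n0[of i] that by force
      ultimately show ?thesis by auto
    qed
    then show "eventually (\<lambda>n. N < X n x) sequentially"
      by (auto simp: eventually_sequentially)
  qed
qed

lemma hitinf_set: "{x\<in>space M. hit_zero X x = \<infinity>} \<in> sets M"
proof -
  have "{x\<in>space M. hit_zero X x = \<infinity>} = (\<Inter>n. {x\<in>space M. X n x \<in> -{0}}) \<inter> space M"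
    by (auto simp: hit_inf_iff)
  also have "\<dots> \<in> sets M" using X_set by auto
  finally show ?thesis .
qed

lemma recur: assumes unb: "\<And>B. \<exists>n. \<phi> n > B" shows "AE x in M. hit_zero X x \<noteq> \<infinity>"
proof -
  let ?E = "{x\<in>space M. hit_zero X x = \<infinity>}"
  have Em[measurable]: "?E \<in> sets M" by (rule hitinf_set)
  let ?u = "\<lambda>n x. ennreal (\<phi> (X n x))"
  have um: "\<And>n. ?u n \<in> borel_measurable M" by measurable
  have pt: "\<top> * indicator ?E x \<le> liminf (\<lambda>n. ?u n x)"
    if x: "x \<in> space M" and e: "hit_zero X x = \<infinity> \<longrightarrow> (\<forall>N. eventually (\<lambda>n. N < X n x) sequentially)" for x
  proof (cases "hit_zero X x = \<infinity>")
    case True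
    have "(\<lambda>n. ?u n x) \<longlonglongrightarrow> \<top>"
      unfolding ennreal_tendsto_top_eq_at_top filterlim_at_top
    proof
      fix B :: real
      obtain m where m: "\<phi> m > B" using unb by blast
      have "eventually (\<lambda>n. m < X n x) sequentially" using e True by blast
      then show "eventually (\<lambda>n. B \<le> \<phi> (X n x)) sequentially"
      proof (rule eventually_mono)
        fix n assume "m < X n x"
        then have "\<phi> m \<le> \<phi> (X n x)" by (intro phi_mono) simp
        then show "B \<le> \<phi> (X n x)" using m by simp
      qed
    qed
    then have "liminf (\<lambda>n. ?u n x) = \<top>" by (rule lim_imp_Liminf[OF trivial_limit_sequentially])
    then show ?thesis by simp
  next
    case False
    then have "indicator ?E x = (0::ennreal)" by simp
    then show ?thesis by simp
  qed
  have "AE x in M. (hit_zero X x = \<infinity> \<longrightarrow> (\<forall>N. eventually (\<lambda>n. N < X n x) sequentially)) \<longrightarrow> \<top> * indicator ?E x \<le> liminf (\<lambda>n. ?u n x)"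
    by (rule AE_I2, rule impI, rule pt)
  from AE_mp[OF escape this] have AE1: "AE x in M. \<top> * indicator ?E x \<le> liminf (\<lambda>n. ?u n x)" .
  have "(\<integral>\<^sup>+x. \<top> * indicator ?E x \<partial>M) \<le> (\<integral>\<^sup>+x. liminf (\<lambda>n. ?u n x) \<partial>M)"
    by (rule nn_integral_mono_AE[OF AE1])
  also have "\<dots> \<le> liminf (\<lambda>n. \<integral>\<^sup>+x. ?u n x \<partial>M)"
    by (rule nn_integral_liminf[OF um])
  also have "\<dots> = ennreal (\<phi> k)" by (simp add: E_phi Liminf_const)
  finally have le: "(\<integral>\<^sup>+x. \<top> * indicator ?E x \<partial>M) \<le> ennreal (\<phi> k)" .
  have "(\<integral>\<^sup>+x. \<top> * indicator ?E x \<partial>M) = \<top> * emeasure M ?E"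
    by (rule nn_integral_cmult_indicator[OF Em])
  with le have le2: "\<top> * emeasure M ?E \<le> ennreal (\<phi> k)" by simp
  have "emeasure M ?E = 0"
  proof (rule ccontr)
    assume "emeasure M ?E \<noteq> 0"
    then have "\<top> * emeasure M ?E = \<top>" by (rule ennreal_top_mult_right)
    with le2 have "\<top> \<le> ennreal (\<phi> k)" by simp
    then show False using ennreal_less_top[of "\<phi> k"] by (simp add: top_unique)
  qed
  then show ?thesis
    by (intro AE_I[where N="?E"]) auto
qed

lemma good_phi: assumes g: "good x" and C: "\<And>j. q j \<le> C"
  shows "\<phi> (X j x) \<le> \<phi> k + C * j"
proof (induction j)
  case 0 then show ?case using g by (simp add: good_def)
next
  case (Suc j)
  have "\<phi> (X (Suc j) x) \<le> \<phi> (X j x) + C"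
  proof (cases "X j x = 0")
    case True
    then have "X (Suc j) x = 0" by (rule good_0[OF g])
    then show ?thesis using True C[of 0] q_pos[of 0] by simp
  next
    case False
    then consider "X (Suc j) x = Suc (X j x)" | "Suc (X (Suc j) x) = X j x" using good_pos[OF g] by blast
    then show ?thesis
    proof cases
      case 1 then show ?thesis using phi_Suc[of "X j x"] C[of "X j x"] by simp
    next
      case 2 then show ?thesis using phi_mono[of "X (Suc j) x" "X j x"] C[of 0] q_pos[of 0] by simp
    qed
  qed
  then show ?case using Suc by (simp add: algebra_simps)
qed

context
  fixes T :: "'a \<Rightarrow> enat"
  assumes hT: "nat_stopping_time M X T" and fT: "(\<integral>\<^sup>+x. ennreal_of_enat (T x) \<partial>M) < \<infinity>"
begin

lemma Tm: "(\<lambda>x. ennreal_of_enat (T x)) \<in> borel_measurable M"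
  by (rule measurable_compose[OF T_meas[OF hT]]) simp

lemma T_fin: "AE x in M. T x \<noteq> \<infinity>"
proof -
  have "AE x in M. ennreal_of_enat (T x) \<noteq> \<infinity>"
    by (rule nn_integral_PInf_AE[OF Tm]) (use fT in simp)
  then show ?thesis by (rule AE_mp) (rule AE_I2, metis ennreal_of_enat_infty infinity_ennreal_def)
qed

lemma sv_meas: "stopped_val X T \<in> M \<rightarrow>\<^sub>M count_space UNIV"
proof -
  have "(\<lambda>x. (\<lambda>e x. case e of enat n \<Rightarrow> X n x | \<infinity> \<Rightarrow> 0) (T x) x) \<in> M \<rightarrow>\<^sub>M count_space UNIV"
  proof (rule measurable_compose_countable[OF _ T_meas[OF hT]])
    fix e :: enat show "(\<lambda>x. case e of enat n \<Rightarrow> X n x | \<infinity> \<Rightarrow> 0) \<in> M \<rightarrow>\<^sub>M count_space UNIV"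
      by (cases e) simp_all
  qed
  then show ?thesis unfolding stopped_val_def[abs_def] by simp
qed

lemma stp_conv: "T x = enat t \<Longrightarrow> (\<lambda>n. f (X (stp T n x) x)) \<longlonglongrightarrow> f (stopped_val X T x)"
proof -
  assume t: "T x = enat t"
  have "eventually (\<lambda>n. f (X (stp T n x) x) = f (stopped_val X T x)) sequentially"
    unfolding eventually_sequentially
    by (rule exI[of _ t]) (simp add: stp_def stopped_val_def t)
  then show ?thesis by (rule tendsto_eventually)
qed

lemma OST_le: "(\<integral>\<^sup>+x. ennreal (\<phi> (stopped_val X T x)) \<partial>M) \<le> ennreal (\<phi> k)"
proof -
  let ?u = "\<lambda>n x. ennreal (\<phi> (X (stp T n x) x))"
  have um: "\<And>n. ?u n \<in> borel_measurable M"
    by (rule measurable_compose[OF Xstp_meas[OF hT]]) simp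
  have "AE x in M. T x \<noteq> \<infinity> \<longrightarrow> liminf (\<lambda>n. ?u n x) = ennreal (\<phi> (stopped_val X T x))"
  proof (rule AE_I2, rule impI)
    fix x assume "T x \<noteq> \<infinity>"
    then obtain t where "T x = enat t" by auto
    from stp_conv[OF this, of "\<lambda>b. ennreal (\<phi> b)"]
    show "liminf (\<lambda>n. ?u n x) = ennreal (\<phi> (stopped_val X T x))"
      by (rule lim_imp_Liminf[OF trivial_limit_sequentially])
  qed
  from AE_mp[OF T_fin this]
  have "(\<integral>\<^sup>+x. ennreal (\<phi> (stopped_val X T x)) \<partial>M) = (\<integral>\<^sup>+x. liminf (\<lambda>n. ?u n x) \<partial>M)"
    by (intro nn_integral_cong_AE) (rule AE_mp, rule AE_I2, auto)
  also have "\<dots> \<le> liminf (\<lambda>n. \<integral>\<^sup>+x. ?u n x \<partial>M)"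
    by (rule nn_integral_liminf[OF um])
  also have "\<dots> = ennreal (\<phi> k)" by (simp add: E_phi_stopped[OF hT] Liminf_const)
  finally show ?thesis .
qed

lemma stp_le: "enat (stp T n x) \<le> T x"
  by (cases "T x") (auto simp: stp_def)

lemma OST_eq: assumes C: "\<And>j. q j \<le> C"
  shows "(\<integral>\<^sup>+x. ennreal (\<phi> (stopped_val X T x)) \<partial>M) = ennreal (\<phi> k)"
proof -
  let ?u = "\<lambda>n x. ennreal (\<phi> (X (stp T n x) x))"
  let ?w = "\<lambda>x. ennreal (\<phi> k) + ennreal C * ennreal_of_enat (T x)"
  have C0: "C \<ge> 0" using C[of 0] q_pos[of 0] by simp
  have um: "\<And>n. ?u n \<in> borel_measurable M"
    by (rule measurable_compose[OF Xstp_meas[OF hT]]) simp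
  have wm: "?w \<in> borel_measurable M" using Tm by measurable
  have svm: "(\<lambda>x. ennreal (\<phi> (stopped_val X T x))) \<in> borel_measurable M"
    by (rule measurable_compose[OF sv_meas]) simp
  have bound: "AE x in M. ?u n x \<le> ?w x" for n
  proof (rule AE_mp[OF AE_good], rule AE_I2, rule impI)
    fix x assume g: "good x"
    have "?u n x \<le> ennreal (\<phi> k + C * stp T n x)"
      using good_phi[OF g C, of "stp T n x"] by (simp add: ennreal_leI)
    also have "\<dots> = ennreal (\<phi> k) + ennreal C * ennreal_of_enat (enat (stp T n x))"
      using C0 phi_nonneg by (simp add: ennreal_plus ennreal_mult ennreal_of_nat_eq_real_of_nat)
    also have "\<dots> \<le> ?w x"
      by (intro add_left_mono mult_left_mono) (simp_all add: stp_le del: ennreal_of_enat_enat)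
    finally show "?u n x \<le> ?w x" .
  qed
  have wfin: "(\<integral>\<^sup>+x. ?w x \<partial>M) < \<infinity>"
  proof -
    have "(\<integral>\<^sup>+x. ?w x \<partial>M) = ennreal (\<phi> k) + ennreal C * (\<integral>\<^sup>+x. ennreal_of_enat (T x) \<partial>M)"
      using Tm by (simp add: nn_integral_add nn_integral_cmult emeasure_space_1)
    also have "\<dots> < \<infinity>" using fT by (simp add: ennreal_mult_less_top)
    finally show ?thesis .
  qed
  have conv: "AE x in M. (\<lambda>n. ?u n x) \<longlonglongrightarrow> ennreal (\<phi> (stopped_val X T x))"
  proof (rule AE_mp[OF T_fin], rule AE_I2, rule impI)
    fix x assume "T x \<noteq> \<infinity>"
    then obtain t where "T x = enat t" by auto
    from stp_conv[OF this] show "(\<lambda>n. ?u n x) \<longlonglongrightarrow> ennreal (\<phi> (stopped_val X T x))" .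
  qed
  have "(\<lambda>n. \<integral>\<^sup>+x. ?u n x \<partial>M) \<longlonglongrightarrow> (\<integral>\<^sup>+x. ennreal (\<phi> (stopped_val X T x)) \<partial>M)"
    by (rule nn_integral_dominated_convergence[OF um svm wm bound wfin conv])
  moreover have "(\<lambda>n. \<integral>\<^sup>+x. ?u n x \<partial>M) = (\<lambda>n. ennreal (\<phi> k))"
    by (simp add: E_phi_stopped[OF hT])
  ultimately show ?thesis using LIMSEQ_unique tendsto_const by metis
qed

end

end


lemma ennreal_add_less_le: "x < y \<Longrightarrow> z \<le> w \<Longrightarrow> w \<noteq> \<top> \<Longrightarrow> x + z < y + (w::ennreal)"
proof -
  assume a: "x < y" "z \<le> w" "w \<noteq> \<top>"
  have "x + z \<le> x + w" using a by (intro add_left_mono)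
  also have "x + w < y + w" using a ennreal_add_left_cancel_less[of w x y] by (simp add: add.commute)
  finally show ?thesis .
qed

context bdc begin

lemma LemZ:
  fixes Z :: "nat \<Rightarrow> 'a \<Rightarrow> nat" and g :: "nat \<Rightarrow> real"
  assumes Zm: "\<And>m. Z m \<in> M \<rightarrow>\<^sub>M count_space UNIV"
    and Z0: "AE x in M. eventually (\<lambda>m. Z m x = 0) sequentially"
    and g0: "g 0 = 0" and gnn: "\<And>n. g n \<ge> 0"
  shows "(\<lambda>m. \<integral>\<^sup>+x. ennreal (g (min (Z m x) N)) \<partial>M) \<longlonglongrightarrow> 0"
proof -
  define D where "D = Max (g ` {..N})"
  have gD: "g (min n N) \<le> D" for n unfolding D_def by (intro Max_ge) auto
  have um: "(\<lambda>x. ennreal (g (min (Z m x) N))) \<in> borel_measurable M" for m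
    by (rule measurable_compose[OF Zm]) simp
  have "(\<lambda>m. \<integral>\<^sup>+x. ennreal (g (min (Z m x) N)) \<partial>M) \<longlonglongrightarrow> (\<integral>\<^sup>+x. 0 \<partial>M)"
  proof (rule nn_integral_dominated_convergence[where w="\<lambda>_. ennreal D"])
    show "AE x in M. ennreal (g (min (Z m x) N)) \<le> ennreal D" for m
      using gD by (intro AE_I2) (simp add: ennreal_leI)
    show "(\<integral>\<^sup>+x. ennreal D \<partial>M) < \<infinity>" by (simp add: emeasure_space_1)
    show "AE x in M. (\<lambda>m. ennreal (g (min (Z m x) N))) \<longlonglongrightarrow> 0"
    proof (rule AE_mp[OF Z0], rule AE_I2, rule impI)
      fix x assume "eventually (\<lambda>m. Z m x = 0) sequentially"
      then have "eventually (\<lambda>m. ennreal (g (min (Z m x) N)) = 0) sequentially"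
        by (rule eventually_mono) (simp add: g0)
      then show "(\<lambda>m. ennreal (g (min (Z m x) N))) \<longlonglongrightarrow> 0"
        by (rule tendsto_eventually)
    qed
  qed (simp_all add: um)
  then show ?thesis by simp
qed

lemma LemA:
  fixes Z :: "nat \<Rightarrow> 'a \<Rightarrow> nat"
  assumes Zm: "\<And>m. Z m \<in> M \<rightarrow>\<^sub>M count_space UNIV"
    and Z0: "AE x in M. eventually (\<lambda>m. Z m x = 0) sequentially"
    and EQ: "\<And>m. (\<integral>\<^sup>+x. ennreal (\<phi> (Z m x)) \<partial>M) = ennreal (\<phi> k)"
    and bnd: "\<And>n. \<phi> n \<le> \<phi> (min n N) + a * n" and a: "a > 0"
    and b: "b \<ge> 0" "b * a < \<phi> k"
  shows "eventually (\<lambda>m. ennreal b < (\<integral>\<^sup>+x. ennreal (real (Z m x)) \<partial>M)) sequentially"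
proof -
  let ?J = "\<lambda>m. \<integral>\<^sup>+x. ennreal (\<phi> (min (Z m x) N)) \<partial>M"
  let ?I = "\<lambda>m. \<integral>\<^sup>+x. ennreal (real (Z m x)) \<partial>M"
  have le: "ennreal (\<phi> k) \<le> ?J m + ennreal a * ?I m" for m
  proof -
    have m1: "(\<lambda>x. ennreal (\<phi> (min (Z m x) N))) \<in> borel_measurable M"
      by (rule measurable_compose[OF Zm]) simp
    have m2: "(\<lambda>x. ennreal (real (Z m x))) \<in> borel_measurable M"
      by (rule measurable_compose[OF Zm]) simp
    have "ennreal (\<phi> k) = (\<integral>\<^sup>+x. ennreal (\<phi> (Z m x)) \<partial>M)" by (rule EQ[symmetric])
    also have "\<dots> \<le> (\<integral>\<^sup>+x. ennreal (\<phi> (min (Z m x) N)) + ennreal a * ennreal (real (Z m x)) \<partial>M)"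
    proof (rule nn_integral_mono)
      fix x
      have "ennreal (\<phi> (Z m x)) \<le> ennreal (\<phi> (min (Z m x) N) + a * real (Z m x))"
        using bnd by (rule ennreal_leI)
      also have "\<dots> = ennreal (\<phi> (min (Z m x) N)) + ennreal a * ennreal (real (Z m x))"
        using a phi_nonneg by (simp add: ennreal_plus ennreal_mult)
      finally show "ennreal (\<phi> (Z m x)) \<le> ennreal (\<phi> (min (Z m x) N)) + ennreal a * ennreal (real (Z m x))" .
    qed
    also have "\<dots> = ?J m + ennreal a * ?I m"
      using m1 m2 by (simp add: nn_integral_add nn_integral_cmult)
    finally show ?thesis .
  qed
  have "?J \<longlonglongrightarrow> 0" by (rule LemZ[OF Zm Z0]) (simp_all add: phi_0 phi_nonneg)
  moreover have "0 < ennreal (\<phi> k - b * a)" using b by simp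
  ultimately have ev: "eventually (\<lambda>m. ?J m < ennreal (\<phi> k - b * a)) sequentially"
    by (rule order_tendstoD)
  then show ?thesis
  proof (rule eventually_mono)
    fix m assume J: "?J m < ennreal (\<phi> k - b * a)"
    show "ennreal b < ?I m"
    proof (rule ccontr)
      assume "\<not> ennreal b < ?I m"
      then have "?I m \<le> ennreal b" by simp
      then have "ennreal a * ?I m \<le> ennreal a * ennreal b" by (rule mult_left_mono) simp
      then have "?J m + ennreal a * ?I m < ennreal (\<phi> k - b * a) + ennreal a * ennreal b"
        using J by (intro ennreal_add_less_le) (auto simp: ennreal_mult_eq_top_iff)
      also have "\<dots> = ennreal (\<phi> k)"
        using a b by (simp add: ennreal_mult[symmetric] ennreal_plus[symmetric] mult.commute del: ennreal_plus)
      finally show False using le[of m] by simp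
    qed
  qed
qed

lemma LemB:
  fixes Z :: "nat \<Rightarrow> 'a \<Rightarrow> nat"
  assumes Zm: "\<And>m. Z m \<in> M \<rightarrow>\<^sub>M count_space UNIV"
    and Z0: "AE x in M. eventually (\<lambda>m. Z m x = 0) sequentially"
    and LE: "\<And>m. (\<integral>\<^sup>+x. ennreal (\<phi> (Z m x)) \<partial>M) \<le> ennreal (\<phi> k)"
    and bnd: "\<And>n. real n \<le> real (min n N) + \<beta> * \<phi> n" and \<beta>: "\<beta> \<ge> 0"
    and u: "\<beta> * \<phi> k < u"
  shows "eventually (\<lambda>m. (\<integral>\<^sup>+x. ennreal (real (Z m x)) \<partial>M) < ennreal u) sequentially"
proof -
  let ?K = "\<lambda>m. \<integral>\<^sup>+x. ennreal (real (min (Z m x) N)) \<partial>M"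
  let ?I = "\<lambda>m. \<integral>\<^sup>+x. ennreal (real (Z m x)) \<partial>M"
  have le: "?I m \<le> ?K m + ennreal (\<beta> * \<phi> k)" for m
  proof -
    have m1: "(\<lambda>x. ennreal (real (min (Z m x) N))) \<in> borel_measurable M"
      by (rule measurable_compose[OF Zm]) simp
    have m2: "(\<lambda>x. ennreal (\<phi> (Z m x))) \<in> borel_measurable M"
      by (rule measurable_compose[OF Zm]) simp
    have "?I m \<le> (\<integral>\<^sup>+x. ennreal (real (min (Z m x) N)) + ennreal \<beta> * ennreal (\<phi> (Z m x)) \<partial>M)"
    proof (rule nn_integral_mono)
      fix x
      have "ennreal (real (Z m x)) \<le> ennreal (real (min (Z m x) N) + \<beta> * \<phi> (Z m x))"
        using bnd by (rule ennreal_leI)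
      also have "\<dots> = ennreal (real (min (Z m x) N)) + ennreal \<beta> * ennreal (\<phi> (Z m x))"
        using \<beta> phi_nonneg by (simp add: ennreal_plus ennreal_mult del: of_nat_min)
      finally show "ennreal (real (Z m x)) \<le> ennreal (real (min (Z m x) N)) + ennreal \<beta> * ennreal (\<phi> (Z m x))" .
    qed
    also have "\<dots> = ?K m + ennreal \<beta> * (\<integral>\<^sup>+x. ennreal (\<phi> (Z m x)) \<partial>M)"
      using m1 m2 by (simp add: nn_integral_add nn_integral_cmult del: of_nat_min)
    also have "\<dots> \<le> ?K m + ennreal \<beta> * ennreal (\<phi> k)"
      by (intro add_left_mono mult_left_mono LE) simp
    also have "\<dots> = ?K m + ennreal (\<beta> * \<phi> k)"
      using \<beta> phi_nonneg by (simp add: ennreal_mult)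
    finally show ?thesis .
  qed
  have "?K \<longlonglongrightarrow> 0" using LemZ[OF Zm Z0, of real N] by simp
  moreover have "0 < ennreal (u - \<beta> * \<phi> k)" using u by simp
  ultimately have ev: "eventually (\<lambda>m. ?K m < ennreal (u - \<beta> * \<phi> k)) sequentially"
    by (rule order_tendstoD)
  then show ?thesis
  proof (rule eventually_mono)
    fix m assume K: "?K m < ennreal (u - \<beta> * \<phi> k)"
    have "?I m \<le> ?K m + ennreal (\<beta> * \<phi> k)" by (rule le)
    also have "\<dots> < ennreal (u - \<beta> * \<phi> k) + ennreal (\<beta> * \<phi> k)"
      using K by (intro ennreal_add_less_le) auto
    also have "\<dots> = ennreal u"
      using u \<beta> phi_nonneg[of k] by (simp add: ennreal_plus[symmetric] del: ennreal_plus)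
    finally show "?I m < ennreal u" .
  qed
qed

end


context bdc begin

lemma bnd_upper: assumes "\<And>j. j \<ge> N \<Longrightarrow> q j \<le> a" "a \<ge> 0"
  shows "\<phi> n \<le> \<phi> (min n N) + a * n"
proof (induction n)
  case 0 then show ?case by (simp add: phi_0)
next
  case (Suc n)
  show ?case
  proof (cases "n < N")
    case True
    then have "min (Suc n) N = Suc n" by simp
    then show ?thesis using assms(2) by simp
  next
    case False
    then have "min (Suc n) N = min n N" by simp
    moreover have "q n \<le> a" using assms(1) False by simp
    ultimately show ?thesis using Suc phi_Suc[of n] by (simp add: algebra_simps)
  qed
qed

lemma bnd_lower0: assumes "\<And>j. j \<ge> N \<Longrightarrow> q j \<ge> c"
  shows "c * (real n - real (min n N)) \<le> \<phi> n"
proof (induction n)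
  case 0 then show ?case by (simp add: phi_0)
next
  case (Suc n)
  show ?case
  proof (cases "n < N")
    case True
    then have "min (Suc n) N = Suc n" by simp
    then show ?thesis using phi_nonneg[of "Suc n"] by simp
  next
    case False
    then have "min (Suc n) N = min n N" by simp
    moreover have "q n \<ge> c" using assms(1) False by simp
    ultimately show ?thesis using Suc phi_Suc[of n] by (simp add: algebra_simps)
  qed
qed

lemma bnd_lower: assumes "\<And>j. j \<ge> N \<Longrightarrow> q j \<ge> c" "c > 0"
  shows "real n \<le> real (min n N) + (1 / c) * \<phi> n"
proof -
  have "c * (real n - real (min n N)) \<le> \<phi> n" by (rule bnd_lower0[OF assms(1)])
  then have "real n - real (min n N) \<le> \<phi> n / c" using assms(2) by (simp add: field_simps)
  then show ?thesis by simp
qed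

lemma phi_unb: assumes "\<And>j. j \<ge> N \<Longrightarrow> q j \<ge> c" "c > 0"
  shows "\<exists>n. \<phi> n > B"
proof -
  define n where "n = N + (nat \<lceil>B / c\<rceil> + 1)"
  have "c * (real n - real (min n N)) \<le> \<phi> n" by (rule bnd_lower0[OF assms(1)])
  moreover have "real n - real (min n N) = real (nat \<lceil>B / c\<rceil>) + 1" unfolding n_def by simp
  moreover have "B / c \<le> real (nat \<lceil>B / c\<rceil>)" by linarith
  then have "B < c * (real (nat \<lceil>B / c\<rceil>) + 1)" using assms(2) by (simp add: field_simps)
  ultimately have "B < \<phi> n" by (metis mult_strict_left_mono order_less_le_trans)
  then show ?thesis by blast
qed

lemma Zconv_fin:
  assumes conv: "(\<lambda>m. ennreal_of_enat (T m x)) \<longlonglongrightarrow> ennreal_of_enat (hit_zero X x)"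
    and h: "hit_zero X x \<noteq> \<infinity>"
  shows "eventually (\<lambda>m. stopped_val X (T m) x = 0) sequentially"
proof -
  obtain h where hh: "hit_zero X x = enat h" using h by auto
  have X0: "X h x = 0" by (rule hit_fin[OF hh])
  have lim: "(\<lambda>m. ennreal_of_enat (T m x)) \<longlonglongrightarrow> ennreal (real h)"
    using conv hh by (simp add: ennreal_of_nat_eq_real_of_nat)
  have up: "eventually (\<lambda>m. ennreal_of_enat (T m x) < ennreal (real h + 1/2)) sequentially"
    by (rule order_tendstoD(2)[OF lim]) (rule ennreal_lessI, simp_all)
  have lo: "eventually (\<lambda>m. h = 0 \<or> ennreal (real h - 1/2) < ennreal_of_enat (T m x)) sequentially"
  proof (cases "h = 0")
    case False
    have "eventually (\<lambda>m. ennreal (real h - 1/2) < ennreal_of_enat (T m x)) sequentially"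
      by (rule order_tendstoD(1)[OF lim]) (use False in \<open>simp add: ennreal_lessI\<close>)
    then show ?thesis by (rule eventually_mono) simp
  qed simp
  show ?thesis
    using up lo
  proof eventually_elim
    case (elim m)
    show ?case
    proof (cases "T m x")
      case (enat j)
      have "real j < real h + 1/2"
        using elim(1) enat by (simp add: ennreal_of_nat_eq_real_of_nat ennreal_less_iff del: ennreal_plus)
      then have jh: "j \<le> h" by linarith
      have "h \<le> j"
      proof (cases "h = 0")
        case False
        then have "ennreal (real h - 1/2) < ennreal (real j)"
          using elim(2) enat by (simp add: ennreal_of_nat_eq_real_of_nat)
        then have "real h - 1/2 < real j" using False by (subst (asm) ennreal_less_iff) auto
        then show ?thesis by linarith
      qed simp
      then show ?thesis using jh enat X0 by (simp add: stopped_val_def)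
    next
      case infinity
      then show ?thesis using elim(1) by simp
    qed
  qed
qed

lemma Zconv_inf:
  assumes conv: "(\<lambda>m. ennreal_of_enat (T m x)) \<longlonglongrightarrow> ennreal_of_enat (hit_zero X x)"
    and h: "hit_zero X x = \<infinity>" and esc: "\<forall>N. eventually (\<lambda>n. N < X n x) sequentially"
    and fin: "\<And>m. T m x \<noteq> \<infinity>"
  shows "eventually (\<lambda>m. N < stopped_val X (T m) x) sequentially"
proof -
  obtain n0 where n0: "\<And>n. n \<ge> n0 \<Longrightarrow> N < X n x"
    using esc by (auto simp: eventually_sequentially)
  have lim: "(\<lambda>m. ennreal_of_enat (T m x)) \<longlonglongrightarrow> \<top>" using conv h by simp
  have "eventually (\<lambda>m. ennreal (real n0) < ennreal_of_enat (T m x)) sequentially"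
    by (rule order_tendstoD(1)[OF lim]) simp
  then show ?thesis
  proof (rule eventually_mono)
    fix m assume a: "ennreal (real n0) < ennreal_of_enat (T m x)"
    obtain j where j: "T m x = enat j" using fin[of m] by auto
    have "real n0 < real j" using a j by (simp add: ennreal_of_nat_eq_real_of_nat ennreal_less_iff)
    then show "N < stopped_val X (T m) x" using n0[of j] j by (simp add: stopped_val_def)
  qed
qed

end


context bdc begin

lemma qbound: assumes "(\<lambda>n. ennreal (q n)) \<longlonglongrightarrow> ennreal t" "t \<ge> 0"
  shows "\<exists>C. \<forall>j. q j \<le> C"
proof -
  have "eventually (\<lambda>n. ennreal (q n) < ennreal (t + 1)) sequentially"
    by (rule order_tendstoD(2)[OF assms(1)]) (rule ennreal_lessI, use assms(2) in auto)
  then obtain N where N: "\<And>n. n \<ge> N \<Longrightarrow> ennreal (q n) < ennreal (t + 1)"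
    by (auto simp: eventually_sequentially)
  define C where "C = max (t + 1) (Max (q ` {..N}))"
  have "q j \<le> C" for j
  proof (cases "j \<ge> N")
    case True
    then have "ennreal (q j) < ennreal (t + 1)" by (rule N)
    then have "q j < t + 1" by (subst (asm) ennreal_less_iff) (use q_pos[of j] in auto)
    then show ?thesis unfolding C_def by simp
  next
    case False
    then have "q j \<le> Max (q ` {..N})" by (intro Max_ge) auto
    then show ?thesis unfolding C_def by simp
  qed
  then show ?thesis by blast
qed

lemma q_ev_le: assumes "(\<lambda>n. ennreal (q n)) \<longlonglongrightarrow> t" "t < ennreal a"
  shows "\<exists>N. \<forall>j\<ge>N. q j \<le> a"
proof -
  have "eventually (\<lambda>n. ennreal (q n) < ennreal a) sequentially"
    by (rule order_tendstoD(2)[OF assms])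
  then obtain N where N: "\<And>n. n \<ge> N \<Longrightarrow> ennreal (q n) < ennreal a"
    by (auto simp: eventually_sequentially)
  have "q j \<le> a" if "j \<ge> N" for j
  proof -
    have "ennreal (q j) < ennreal a" using N that by blast
    then show ?thesis using q_pos[of j] by (cases "a \<ge> 0") (auto simp: ennreal_less_iff ennreal_neg)
  qed
  then show ?thesis by blast
qed

lemma q_ev_ge: assumes "(\<lambda>n. ennreal (q n)) \<longlonglongrightarrow> t" "ennreal c < t" "c \<ge> 0"
  shows "\<exists>N. \<forall>j\<ge>N. q j \<ge> c"
proof -
  have "eventually (\<lambda>n. ennreal c < ennreal (q n)) sequentially"
    by (rule order_tendstoD(1)[OF assms(1,2)])
  then obtain N where N: "\<And>n. n \<ge> N \<Longrightarrow> ennreal c < ennreal (q n)"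
    by (auto simp: eventually_sequentially)
  have "q j \<ge> c" if "j \<ge> N" for j
  proof -
    have "ennreal c < ennreal (q j)" using N that by blast
    then show ?thesis using q_pos[of j] assms(3) by (simp add: ennreal_less_iff)
  qed
  then show ?thesis by blast
qed

lemma Z0_of: assumes Zfin: "AE x in M. hit_zero X x \<noteq> \<infinity> \<longrightarrow> eventually (\<lambda>m. Z m x = 0) sequentially"
  and R: "AE x in M. hit_zero X x \<noteq> \<infinity>"
  shows "AE x in M. eventually (\<lambda>m. Z m x = 0) sequentially"
  using Zfin R by (rule AE_mp[OF _ AE_mp], intro AE_I2 impI) blast

context
  fixes Z :: "nat \<Rightarrow> 'a \<Rightarrow> nat"
  assumes Zm: "\<And>m. Z m \<in> M \<rightarrow>\<^sub>M count_space UNIV"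
    and Zfin: "AE x in M. hit_zero X x \<noteq> \<infinity> \<longrightarrow> eventually (\<lambda>m. Z m x = 0) sequentially"
    and Zinf: "AE x in M. hit_zero X x = \<infinity> \<longrightarrow> (\<forall>N. eventually (\<lambda>m. N < Z m x) sequentially)"
    and EQ: "\<And>C m. (\<And>j. q j \<le> C) \<Longrightarrow> (\<integral>\<^sup>+x. ennreal (\<phi> (Z m x)) \<partial>M) = ennreal (\<phi> k)"
    and LE: "\<And>m. (\<integral>\<^sup>+x. ennreal (\<phi> (Z m x)) \<partial>M) \<le> ennreal (\<phi> k)"
    and k1: "k \<ge> 1"
begin

lemma phik: "\<phi> k > 0" using phi_pos[OF k1] .

lemma case_zero: assumes tl: "(\<lambda>n. ennreal (q n)) \<longlonglongrightarrow> 0"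
  shows "(\<lambda>m. \<integral>\<^sup>+x. ennreal (real (Z m x)) \<partial>M) \<longlonglongrightarrow> \<top>"
proof -
  obtain C where C: "\<And>j. q j \<le> C" using qbound[of 0] tl by auto
  note EQ' = EQ[OF C]
  let ?E = "{x\<in>space M. hit_zero X x = \<infinity>}"
  have Em[measurable]: "?E \<in> sets M" by (rule hitinf_set)
  let ?I = "\<lambda>m. \<integral>\<^sup>+x. ennreal (real (Z m x)) \<partial>M"
  show ?thesis
  proof (cases "emeasure M ?E = 0")
    case True
    have R: "AE x in M. hit_zero X x \<noteq> \<infinity>"
      by (rule AE_I'[of ?E]) (use True in \<open>auto intro: null_setsI\<close>)
    have Z0: "AE x in M. eventually (\<lambda>m. Z m x = 0) sequentially" by (rule Z0_of[OF Zfin R])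
    show ?thesis unfolding order_tendsto_iff
    proof (intro conjI allI impI)
      fix y :: ennreal assume "y < \<top>"
      then obtain b where b: "b \<ge> 0" "y = ennreal b" using less_top_ennreal by blast
      define a where "a = \<phi> k / (2 * (b + 1))"
      have a0: "a > 0" unfolding a_def using phik b by simp
      have ba: "b * a < \<phi> k"
      proof -
        have "b * a = \<phi> k * (b / (2 * (b + 1)))" unfolding a_def by (simp add: field_simps)
        also have "\<dots> < \<phi> k * 1"
          using phik b by (intro mult_strict_left_mono) (simp_all add: field_simps)
        finally show ?thesis by simp
      qed
      obtain N where N: "\<And>j. j \<ge> N \<Longrightarrow> q j \<le> a"
        using q_ev_le[OF tl, of a] a0 by auto
      have "eventually (\<lambda>m. ennreal b < ?I m) sequentially"
        by (rule LemA[OF Zm Z0 EQ' bnd_upper[OF N less_imp_le[OF a0]] a0 b(1) ba]) (use a0 in simp)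
      then show "eventually (\<lambda>m. y < ?I m) sequentially" using b by simp
    qed simp
  next
    case False
    let ?u = "\<lambda>m x. ennreal (real (Z m x))"
    have um: "\<And>m. ?u m \<in> borel_measurable M" by (rule measurable_compose[OF Zm]) simp
    have pt: "\<top> * indicator ?E x \<le> liminf (\<lambda>m. ?u m x)"
      if x: "x \<in> space M" and e: "hit_zero X x = \<infinity> \<longrightarrow> (\<forall>N. eventually (\<lambda>m. N < Z m x) sequentially)" for x
    proof (cases "hit_zero X x = \<infinity>")
      case True
      have "(\<lambda>m. ?u m x) \<longlonglongrightarrow> \<top>"
        unfolding ennreal_tendsto_top_eq_at_top filterlim_at_top
      proof
        fix B :: real
        have "eventually (\<lambda>m. nat \<lceil>B\<rceil> < Z m x) sequentially" using e True by blast
        then show "eventually (\<lambda>m. B \<le> real (Z m x)) sequentially"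
          by (rule eventually_mono) linarith
      qed
      then have "liminf (\<lambda>m. ?u m x) = \<top>" by (rule lim_imp_Liminf[OF trivial_limit_sequentially])
      then show ?thesis by simp
    next
      case False
      then have "indicator ?E x = (0::ennreal)" by simp
      then show ?thesis by simp
    qed
    have "AE x in M. (hit_zero X x = \<infinity> \<longrightarrow> (\<forall>N. eventually (\<lambda>m. N < Z m x) sequentially)) \<longrightarrow> \<top> * indicator ?E x \<le> liminf (\<lambda>m. ?u m x)"
      by (rule AE_I2, rule impI, rule pt)
    from AE_mp[OF Zinf this] have AE1: "AE x in M. \<top> * indicator ?E x \<le> liminf (\<lambda>m. ?u m x)" .
    have "\<top> * emeasure M ?E = (\<integral>\<^sup>+x. \<top> * indicator ?E x \<partial>M)"
      by (rule nn_integral_cmult_indicator[OF Em, symmetric])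
    also have "\<dots> \<le> (\<integral>\<^sup>+x. liminf (\<lambda>m. ?u m x) \<partial>M)"
      by (rule nn_integral_mono_AE[OF AE1])
    also have "\<dots> \<le> liminf ?I"
      by (rule nn_integral_liminf[OF um])
    finally have "\<top> \<le> liminf ?I" using False by simp
    then have lt: "liminf ?I = \<top>" by (simp add: top_unique)
    show ?thesis unfolding order_tendsto_iff
    proof (intro conjI allI impI)
      fix y :: ennreal assume "y < \<top>"
      then show "eventually (\<lambda>m. y < ?I m) sequentially" using lt by (intro less_LiminfD) simp
    qed simp
  qed
qed

lemma case_inf: assumes tl: "(\<lambda>n. ennreal (q n)) \<longlonglongrightarrow> \<top>"
  shows "(\<lambda>m. \<integral>\<^sup>+x. ennreal (real (Z m x)) \<partial>M) \<longlonglongrightarrow> 0"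
proof -
  obtain N1 where N1: "\<And>j. j \<ge> N1 \<Longrightarrow> q j \<ge> 1" using q_ev_ge[OF tl, of 1] by auto
  have unb: "\<And>B. \<exists>n. \<phi> n > B" using phi_unb[OF N1] by simp
  have R: "AE x in M. hit_zero X x \<noteq> \<infinity>" by (rule recur[OF unb])
  have Z0: "AE x in M. eventually (\<lambda>m. Z m x = 0) sequentially" by (rule Z0_of[OF Zfin R])
  let ?I = "\<lambda>m. \<integral>\<^sup>+x. ennreal (real (Z m x)) \<partial>M"
  show ?thesis unfolding order_tendsto_iff
  proof (intro conjI allI impI)
    fix u :: ennreal assume u: "0 < u"
    obtain u' where u': "u' > 0" "ennreal u' \<le> u"
    proof (cases "u = \<top>")
      case True then show ?thesis using that[of 1] by simp
    next
      case False
      then obtain v where "v \<ge> 0" "u = ennreal v" using less_top_ennreal top.not_eq_extremum by blast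
      then show ?thesis using that[of v] u by simp
    qed
    define \<beta> where "\<beta> = u' / (2 * (\<phi> k + 1))"
    have \<beta>0: "\<beta> > 0" unfolding \<beta>_def using u' phi_nonneg[of k] by simp
    have \<beta>u: "\<beta> * \<phi> k < u'"
    proof -
      have "\<beta> * \<phi> k = u' * (\<phi> k / (2 * (\<phi> k + 1)))" unfolding \<beta>_def by (simp add: field_simps)
      also have "\<dots> < u' * 1"
        using u' phi_nonneg[of k] by (intro mult_strict_left_mono) (simp_all add: field_simps)
      finally show ?thesis by simp
    qed
    obtain N where N: "\<And>j. j \<ge> N \<Longrightarrow> q j \<ge> 1 / \<beta>" using q_ev_ge[OF tl, of "1 / \<beta>"] \<beta>0 by auto
    have bnd: "real n \<le> real (min n N) + \<beta> * \<phi> n" for n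
      using bnd_lower[where N=N and c="1/\<beta>" and n=n] N \<beta>0 by simp
    have "eventually (\<lambda>m. ?I m < ennreal u') sequentially"
      by (rule LemB[OF Zm Z0 LE bnd _ \<beta>u]) (use \<beta>0 in simp)
    then show "eventually (\<lambda>m. ?I m < u) sequentially"
      by (rule eventually_mono) (use u' in auto)
  qed simp
qed

lemma case_mid: assumes tl: "(\<lambda>n. ennreal (q n)) \<longlonglongrightarrow> ennreal t" and t: "t > 0"
  shows "(\<lambda>m. \<integral>\<^sup>+x. ennreal (real (Z m x)) \<partial>M) \<longlonglongrightarrow> ennreal (\<phi> k / t)"
proof -
  obtain C where C: "\<And>j. q j \<le> C" using qbound[OF tl] t by auto
  note EQ' = EQ[OF C]
  obtain N1 where N1: "\<And>j. j \<ge> N1 \<Longrightarrow> q j \<ge> t / 2"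
    using q_ev_ge[OF tl, of "t/2"] t by (auto simp: ennreal_lessI)
  have unb: "\<And>B. \<exists>n. \<phi> n > B" using phi_unb[OF N1] t by simp
  have R: "AE x in M. hit_zero X x \<noteq> \<infinity>" by (rule recur[OF unb])
  have Z0: "AE x in M. eventually (\<lambda>m. Z m x = 0) sequentially" by (rule Z0_of[OF Zfin R])
  let ?I = "\<lambda>m. \<integral>\<^sup>+x. ennreal (real (Z m x)) \<partial>M"
  show ?thesis unfolding order_tendsto_iff
  proof (intro conjI allI impI)
    fix y assume y: "y < ennreal (\<phi> k / t)"
    then obtain b where b: "b \<ge> 0" "y = ennreal b" using less_top_ennreal
      by (metis ennreal_less_top order.strict_trans)
    have bt: "b < \<phi> k / t" using y b phik t by (simp add: ennreal_less_iff)
    then have bt': "b * t < \<phi> k" using t by (simp add: field_simps)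
    define a where "a = t + (\<phi> k - b * t) / (2 * (b + 1))"
    have ta: "t < a" unfolding a_def using bt' b by simp
    have a0: "a > 0" using ta t by simp
    have ba: "b * a < \<phi> k"
    proof -
      have "b * a = b * t + (\<phi> k - b * t) * (b / (2 * (b + 1)))" unfolding a_def by (simp add: field_simps)
      also have "\<dots> < b * t + (\<phi> k - b * t) * 1"
        using bt' b by (intro add_strict_left_mono mult_strict_left_mono) (simp_all add: field_simps)
      finally show ?thesis by simp
    qed
    obtain N where N: "\<And>j. j \<ge> N \<Longrightarrow> q j \<le> a"
      using q_ev_le[OF tl, of a] ta t by (auto simp: ennreal_lessI)
    have "eventually (\<lambda>m. ennreal b < ?I m) sequentially"
      by (rule LemA[OF Zm Z0 EQ' bnd_upper[OF N less_imp_le[OF a0]] a0 b(1) ba])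
    then show "eventually (\<lambda>m. y < ?I m) sequentially" using b by simp
  next
    fix y assume y: "ennreal (\<phi> k / t) < y"
    define u where "u = (if y = \<top> then \<phi> k / t + 1 else enn2real y)"
    have uy: "ennreal u \<le> y" unfolding u_def by (cases "y = \<top>") (auto simp: less_top ennreal_enn2real_if)
    have ku: "\<phi> k / t < u"
    proof (cases "y = \<top>")
      case False
      then have "y = ennreal (enn2real y)" by (simp add: less_top)
      then have "ennreal (\<phi> k / t) < ennreal (enn2real y)" using y by simp
      then show ?thesis unfolding u_def using False phik t by (simp add: ennreal_less_iff)
    qed (simp add: u_def)
    have u0: "u > 0" using ku phik t by (smt (verit) divide_pos_pos)
    define c where "c = (t + \<phi> k / u) / 2"
    have ku': "\<phi> k / u < t" using ku u0 t phik by (simp add: field_simps)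
    have half_avg2: "(tt + w) / 2 < tt" if "w < tt" for w tt :: real using that by (simp add: field_simps)
    have ct: "c < t" unfolding c_def by (rule half_avg2[OF ku'])
    have c0: "c > 0" unfolding c_def using t phik u0 by (simp add: add_pos_pos)
    have half_avg: "w < (tt + w) / 2" if "w < tt" for w tt :: real using that by (simp add: field_simps)
    have cu: "\<phi> k / u < c" unfolding c_def by (rule half_avg[OF ku'])
    have \<beta>u: "(1 / c) * \<phi> k < u" using cu c0 u0 by (simp add: field_simps)
    obtain N where N: "\<And>j. j \<ge> N \<Longrightarrow> q j \<ge> c"
      using q_ev_ge[OF tl, of c] ct c0 by (auto simp: ennreal_lessI)
    have bnd: "real n \<le> real (min n N) + (1 / c) * \<phi> n" for n
      by (rule bnd_lower[OF N c0])
    have "eventually (\<lambda>m. ?I m < ennreal u) sequentially"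
      by (rule LemB[OF Zm Z0 LE bnd _ \<beta>u]) (use c0 in simp)
    then show "eventually (\<lambda>m. ?I m < y) sequentially"
      by (rule eventually_mono) (use uy in auto)
  qed
qed

end

end



theorem theorem1:
  fixes M :: "'a measure" and l r :: "nat \<Rightarrow> real" and k :: nat
    and X :: "nat \<Rightarrow> 'a \<Rightarrow> nat" and t_inf :: ennreal
  assumes lr_pos: "\<And>n. n \<ge> 1 \<Longrightarrow> l n > 0 \<and> r n > 0"
    and lr_sum: "\<And>n. n \<ge> 1 \<Longrightarrow> l n + r n = 1"
    and k: "k \<ge> 1"
    and chain: "bd_chain M l r k X"
    and t_lim: "(\<lambda>n. ennreal (t_seq l r n)) \<longlonglongrightarrow> t_inf"
  shows "\<forall>T :: nat \<Rightarrow> 'a \<Rightarrow> enat.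
     ((\<forall>m\<ge>1. nat_stopping_time M X (T m)) \<and>
      (\<forall>m\<ge>1. \<forall>x\<in>space M. T m x \<le> T (Suc m) x) \<and>
      (\<forall>m\<ge>1. (\<integral>\<^sup>+ x. ennreal_of_enat (T m x) \<partial>M) < \<infinity>) \<and>
      (AE x in M. (\<lambda>m. ennreal_of_enat (T m x)) \<longlonglongrightarrow> ennreal_of_enat (hit_zero X x)))
     \<longrightarrow>
     (\<lambda>m. \<integral>\<^sup>+ x. ennreal (real (stopped_val X (T m) x)) \<partial>M) \<longlonglongrightarrow>
       (let S = (\<Sum>j<k. (\<Prod>i=1..j. l i / r i))
        in if t_inf = 0 then \<infinity> else if t_inf = \<infinity> then 0 else ennreal S / t_inf)"
proof (intro allI impI)
  fix T :: "nat \<Rightarrow> 'a \<Rightarrow> enat"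
  assume H: "(\<forall>m\<ge>1. nat_stopping_time M X (T m)) \<and>
      (\<forall>m\<ge>1. \<forall>x\<in>space M. T m x \<le> T (Suc m) x) \<and>
      (\<forall>m\<ge>1. (\<integral>\<^sup>+ x. ennreal_of_enat (T m x) \<partial>M) < \<infinity>) \<and>
      (AE x in M. (\<lambda>m. ennreal_of_enat (T m x)) \<longlonglongrightarrow> ennreal_of_enat (hit_zero X x))"
  interpret bdc M l r k X using lr_pos lr_sum chain by unfold_locales auto
  have hT: "\<And>m. nat_stopping_time M X (T (Suc m))" using H by auto
  have fT: "\<And>m. (\<integral>\<^sup>+x. ennreal_of_enat (T (Suc m) x) \<partial>M) < \<infinity>" using H by auto
  have conv0: "AE x in M. (\<lambda>m. ennreal_of_enat (T m x)) \<longlonglongrightarrow> ennreal_of_enat (hit_zero X x)"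
    using H by blast
  have "AE x in M. (\<lambda>m. ennreal_of_enat (T m x)) \<longlonglongrightarrow> ennreal_of_enat (hit_zero X x) \<longrightarrow>
      (\<lambda>m. ennreal_of_enat (T (Suc m) x)) \<longlonglongrightarrow> ennreal_of_enat (hit_zero X x)"
    by (rule AE_I2, rule impI, erule LIMSEQ_Suc)
  from AE_mp[OF conv0 this]
  have conv: "AE x in M. (\<lambda>m. ennreal_of_enat (T (Suc m) x)) \<longlonglongrightarrow> ennreal_of_enat (hit_zero X x)" .
  define Z where "Z = (\<lambda>m x. stopped_val X (T (Suc m)) x)"
  have Zm: "\<And>m. Z m \<in> M \<rightarrow>\<^sub>M count_space UNIV"
    unfolding Z_def using sv_meas[OF hT fT] by simp
  have finT: "AE x in M. \<forall>m. T (Suc m) x \<noteq> \<infinity>"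
    by (subst AE_all_countable) (intro allI T_fin[OF hT fT])
  have "AE x in M. (\<lambda>m. ennreal_of_enat (T (Suc m) x)) \<longlonglongrightarrow> ennreal_of_enat (hit_zero X x) \<longrightarrow>
      (hit_zero X x \<noteq> \<infinity> \<longrightarrow> eventually (\<lambda>m. Z m x = 0) sequentially)"
    unfolding Z_def by (rule AE_I2, intro impI, rule Zconv_fin[where T="\<lambda>m. T (Suc m)"])
  from AE_mp[OF conv this]
  have Zfin: "AE x in M. hit_zero X x \<noteq> \<infinity> \<longrightarrow> eventually (\<lambda>m. Z m x = 0) sequentially" .
  have all3: "AE x in M. (\<lambda>m. ennreal_of_enat (T (Suc m) x)) \<longlonglongrightarrow> ennreal_of_enat (hit_zero X x)
     \<and> (hit_zero X x = \<infinity> \<longrightarrow> (\<forall>N. eventually (\<lambda>n. N < X n x) sequentially))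
     \<and> (\<forall>m. T (Suc m) x \<noteq> \<infinity>)"
    using conv escape finT by (simp add: AE_conj_iff)
  have "AE x in M. ((\<lambda>m. ennreal_of_enat (T (Suc m) x)) \<longlonglongrightarrow> ennreal_of_enat (hit_zero X x)
     \<and> (hit_zero X x = \<infinity> \<longrightarrow> (\<forall>N. eventually (\<lambda>n. N < X n x) sequentially))
     \<and> (\<forall>m. T (Suc m) x \<noteq> \<infinity>)) \<longrightarrow>
     (hit_zero X x = \<infinity> \<longrightarrow> (\<forall>N. eventually (\<lambda>m. N < Z m x) sequentially))"
  proof (rule AE_I2, intro impI allI)
    fix x N assume a: "(\<lambda>m. ennreal_of_enat (T (Suc m) x)) \<longlonglongrightarrow> ennreal_of_enat (hit_zero X x)
     \<and> (hit_zero X x = \<infinity> \<longrightarrow> (\<forall>N. eventually (\<lambda>n. N < X n x) sequentially))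
     \<and> (\<forall>m. T (Suc m) x \<noteq> \<infinity>)" and h: "hit_zero X x = \<infinity>"
    show "eventually (\<lambda>m. N < Z m x) sequentially"
      unfolding Z_def
      by (rule Zconv_inf[where T="\<lambda>m. T (Suc m)"]) (use a h in auto)
  qed
  from AE_mp[OF all3 this]
  have Zinf: "AE x in M. hit_zero X x = \<infinity> \<longrightarrow> (\<forall>N. eventually (\<lambda>m. N < Z m x) sequentially)" .
  have EQ: "\<And>C m. (\<And>j. q j \<le> C) \<Longrightarrow> (\<integral>\<^sup>+x. ennreal (\<phi> (Z m x)) \<partial>M) = ennreal (\<phi> k)"
    unfolding Z_def by (rule OST_eq[OF hT fT])
  have LE: "\<And>m. (\<integral>\<^sup>+x. ennreal (\<phi> (Z m x)) \<partial>M) \<le> ennreal (\<phi> k)"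
    unfolding Z_def by (rule OST_le[OF hT fT])
  have S: "(\<Sum>j<k. (\<Prod>i=1..j. l i / r i)) = \<phi> k" by (simp add: phi_def qq_def)
  have tl: "(\<lambda>n. ennreal (q n)) \<longlonglongrightarrow> t_inf" using t_lim by (simp add: t_seq_q)
  have cz: "(\<lambda>m. \<integral>\<^sup>+x. ennreal (real (Z m x)) \<partial>M) \<longlonglongrightarrow> \<top>" if "(\<lambda>n. ennreal (q n)) \<longlonglongrightarrow> 0"
    by (rule case_zero[OF Zm Zfin Zinf _ LE k that]) (fact EQ)
  have ci: "(\<lambda>m. \<integral>\<^sup>+x. ennreal (real (Z m x)) \<partial>M) \<longlonglongrightarrow> 0" if "(\<lambda>n. ennreal (q n)) \<longlonglongrightarrow> \<top>"
    by (rule case_inf[OF Zm Zfin Zinf _ LE k that]) (fact EQ)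
  have cm: "(\<lambda>m. \<integral>\<^sup>+x. ennreal (real (Z m x)) \<partial>M) \<longlonglongrightarrow> ennreal (\<phi> k / t)"
    if "(\<lambda>n. ennreal (q n)) \<longlonglongrightarrow> ennreal t" "t > 0" for t
    by (rule case_mid[OF Zm Zfin Zinf _ LE k that]) (fact EQ)
  have main: "(\<lambda>m. \<integral>\<^sup>+x. ennreal (real (Z m x)) \<partial>M) \<longlonglongrightarrow>
      (if t_inf = 0 then \<infinity> else if t_inf = \<infinity> then 0 else ennreal (\<phi> k) / t_inf)"
  proof (cases "t_inf = 0")
    case True
    then show ?thesis using cz tl by simp
  next
    case F0: False
    show ?thesis
    proof (cases "t_inf = \<infinity>")
      case True
      then show ?thesis using ci tl F0 by simp
    next
      case False
      then obtain t where t: "t \<ge> 0" "t_inf = ennreal t" by (cases t_inf) auto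
      then have t0: "t > 0" using F0 by (cases "t = 0") auto
      have "ennreal (\<phi> k) / t_inf = ennreal (\<phi> k / t)"
        using t t0 phi_nonneg[of k] by (simp add: divide_ennreal)
      then show ?thesis using cm[of t] tl t t0 F0 False by simp
    qed
  qed
  show "(\<lambda>m. \<integral>\<^sup>+ x. ennreal (real (stopped_val X (T m) x)) \<partial>M) \<longlonglongrightarrow>
       (let S = (\<Sum>j<k. (\<Prod>i=1..j. l i / r i))
        in if t_inf = 0 then \<infinity> else if t_inf = \<infinity> then 0 else ennreal S / t_inf)"
    unfolding Let_def S
    by (rule LIMSEQ_imp_Suc) (use main in \<open>simp add: Z_def\<close>)
qed


end
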